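(* Let $\Lambda=[m,n]\cap\mathbb Z$, let $(\nu_j)$ be real, and let $m\le l\le r\le n$. Then for all $t\in\mathbb R$, $$\|[c_l(t),a_r^*]\|\ge|\langle e^{-2itH^\Lambda_{\rm eff}}\delta_l,\delta_r\rangle|,$$ where $c_l(t)=e^{itH_\Lambda}c_le^{-itH_\Lambda}$.
   Context: $\mathfrak G_\Lambda=\bigotimes_{j=m}^n\mathbb C^2$; $\sigma_j^{x,y,z}$ are the Pauli matrices $\begin{pmatrix}0&1\\1&0\end{pmatrix},\begin{pmatrix}0&-i\\i&0\end{pmatrix},\begin{pmatrix}1&0\\0&-1\end{pmatrix}$ acting on factor $j$. $H_\Lambda=-\sum_{j=m}^{n-1}(\sigma^x_j\sigma^x_{j+1}+\sigma^y_j\sigma^y_{j+1})-\sum_{j=m}^n\nu_j\sigma^z_j$. Define $a_j^*=\frac12(\sigma^x_j+i\sigma^y_j)$, $a_j=\frac12(\sigma^x_j-i\sigma^y_j)$, and the Jordan–Wigner operators $c_m=a_m$, $c_{m+j}=\sigma^z_m\sigma^z_{m+1}\cdots\sigma^z_{m+j-1}a_{m+j}$ for $1\le j\le n-m$. $H^\Lambda_{\rm eff}$ is the restriction of $(H_{\rm eff}\psi)_k=\psi_{k+1}+\psi_{k-1}+\nu_k\psi_k$ to $\ell^2([m,n]\cap\mathbb Z)$ (Dirichlet truncation), and $\delta_j$ are the standard basis vectors. *)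

theory Defs
  imports "HOL-Analysis.Analysis" "Jordan_Normal_Form.Matrix"
begin

definition pauli_x :: "complex mat" where
  "pauli_x = mat_of_rows_list 2 [[0, 1], [1, 0]]"
definition pauli_y :: "complex mat" where
  "pauli_y = mat_of_rows_list 2 [[0, -\<i>], [\<i>, 0]]"
definition pauli_z :: "complex mat" where
  "pauli_z = mat_of_rows_list 2 [[1, 0], [0, -1]]"

text \<open>A basis index b < 2^N encodes the product basis vector whose k-th factor
  (site m+k) is the (b div 2^k mod 2)-th standard basis vector of C^2.\<close>

definition nsites :: "int \<Rightarrow> int \<Rightarrow> nat" where
  "nsites m n = nat (n - m + 1)"

definition bitk :: "nat \<Rightarrow> nat \<Rightarrow> nat" where
  "bitk b k = (b div 2 ^ k) mod 2"

text \<open>The operator A (a 2x2 matrix) acting on tensor factor k, identity elsewhere.\<close>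
definition site_op :: "nat \<Rightarrow> nat \<Rightarrow> complex mat \<Rightarrow> complex mat" where
  "site_op N k A = mat (2 ^ N) (2 ^ N) (\<lambda>(i, j).
      if (\<forall>l<N. l \<noteq> k \<longrightarrow> bitk i l = bitk j l) then A $$ (bitk i k, bitk j k) else 0)"

definition sig :: "int \<Rightarrow> int \<Rightarrow> complex mat \<Rightarrow> int \<Rightarrow> complex mat" where
  "sig m n A j = site_op (nsites m n) (nat (j - m)) A"

definition a_op :: "int \<Rightarrow> int \<Rightarrow> int \<Rightarrow> complex mat" where
  "a_op m n j = (1/2 :: complex) \<cdot>\<^sub>m (sig m n pauli_x j - \<i> \<cdot>\<^sub>m sig m n pauli_y j)"

definition a_star :: "int \<Rightarrow> int \<Rightarrow> int \<Rightarrow> complex mat" where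
  "a_star m n j = (1/2 :: complex) \<cdot>\<^sub>m (sig m n pauli_x j + \<i> \<cdot>\<^sub>m sig m n pauli_y j)"

definition c_op :: "int \<Rightarrow> int \<Rightarrow> int \<Rightarrow> complex mat" where
  "c_op m n j = foldr (\<lambda>i M. sig m n pauli_z i * M) [m..j - 1] (a_op m n j)"

definition msum :: "nat \<Rightarrow> (int \<Rightarrow> complex mat) \<Rightarrow> int list \<Rightarrow> complex mat" where
  "msum D f xs = foldr (\<lambda>i M. f i + M) xs (0\<^sub>m D D)"

definition H_Lambda :: "int \<Rightarrow> int \<Rightarrow> (int \<Rightarrow> real) \<Rightarrow> complex mat" where
  "H_Lambda m n \<nu> =
     - msum (2 ^ nsites m n) (\<lambda>j. sig m n pauli_x j * sig m n pauli_x (j + 1)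
                                  + sig m n pauli_y j * sig m n pauli_y (j + 1)) [m..n - 1]
     - msum (2 ^ nsites m n) (\<lambda>j. complex_of_real (\<nu> j) \<cdot>\<^sub>m sig m n pauli_z j) [m..n]"

text \<open>Dirichlet restriction of \<open>(H_eff \<psi>)_k = \<psi>_{k+1} + \<psi>_{k-1} + \<nu>_k \<psi>_k\<close> to
  \<open>\<ell>^2([m,n] \<inter> \<int>)\<close>; row/column index i corresponds to site m+i.\<close>
definition H_eff :: "int \<Rightarrow> int \<Rightarrow> (int \<Rightarrow> real) \<Rightarrow> complex mat" where
  "H_eff m n \<nu> = mat (nsites m n) (nsites m n) (\<lambda>(i, j).
      if i = j then complex_of_real (\<nu> (m + int i))
      else if i = j + 1 \<or> j = i + 1 then 1 else 0)"

definition mexp :: "complex mat \<Rightarrow> complex mat" where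
  "mexp A = mat (dim_row A) (dim_row A) (\<lambda>(i, j). \<Sum>k. (A ^\<^sub>m k) $$ (i, j) / of_nat (fact k))"

definition vnorm :: "complex vec \<Rightarrow> real" where
  "vnorm v = sqrt (\<Sum>i<dim_vec v. (cmod (v $ i))\<^sup>2)"

definition opnorm :: "complex mat \<Rightarrow> real" where
  "opnorm A = Sup {vnorm (A *\<^sub>v v) | v. v \<in> carrier_vec (dim_col A) \<and> vnorm v \<le> 1}"

definition c_t :: "int \<Rightarrow> int \<Rightarrow> (int \<Rightarrow> real) \<Rightarrow> int \<Rightarrow> real \<Rightarrow> complex mat" where
  "c_t m n \<nu> l t = mexp ((\<i> * complex_of_real t) \<cdot>\<^sub>m H_Lambda m n \<nu>) * c_op m n l
                   * mexp ((- \<i> * complex_of_real t) \<cdot>\<^sub>m H_Lambda m n \<nu>)"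

end

theory Submission
  imports Defs
begin


lemma mult_entry:
  assumes "A \<in> carrier_mat a b" "B \<in> carrier_mat b c" "i < a" "j < c"
  shows "(A * B) $$ (i,j) = (\<Sum>k<b. A $$ (i,k) * B $$ (k,j))"
  using assms by (auto simp: scalar_prod_def lessThan_atLeast0 intro!: sum.cong)

lemma mv_entry:
  assumes "A \<in> carrier_mat a b" "v \<in> carrier_vec b" "i < a"
  shows "(A *\<^sub>v v) $ i = (\<Sum>k<b. A $$ (i,k) * v $ k)"
  using assms by (auto simp: scalar_prod_def lessThan_atLeast0 intro!: sum.cong)

definition bnd :: "complex mat \<Rightarrow> real" where
  "bnd A = (\<Sum>p<dim_row A. \<Sum>q<dim_row A. cmod (A $$ (p,q)))"

lemma bnd_ge: "A \<in> carrier_mat D D \<Longrightarrow> p < D \<Longrightarrow> q < D \<Longrightarrow> cmod (A $$ (p,q)) \<le> bnd A"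
proof -
  assume A: "A \<in> carrier_mat D D" and pq: "p < D" "q < D"
  have "cmod (A $$ (p,q)) \<le> (\<Sum>q'<D. cmod (A $$ (p,q')))"
    using pq by (intro member_le_sum) auto
  also have "\<dots> \<le> (\<Sum>p'<D. \<Sum>q'<D. cmod (A $$ (p',q')))"
    using pq by (intro member_le_sum[where f="\<lambda>p'. \<Sum>q'<D. cmod (A $$ (p',q'))"]) (auto intro: sum_nonneg)
  finally show ?thesis using A by (simp add: bnd_def)
qed

lemma bnd_nonneg: "0 \<le> bnd A" unfolding bnd_def by (intro sum_nonneg) auto

lemma pow_entry_bound:
  fixes A :: "complex mat"
  assumes A: "A \<in> carrier_mat D D" and ij: "i < D" "j < D"
  shows "cmod ((A ^\<^sub>m k) $$ (i,j)) \<le> (real D * bnd A) ^ k"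
  using ij
proof (induction k arbitrary: i j)
  case 0 then show ?case using A by auto
next
  case (Suc k)
  have "(A ^\<^sub>m Suc k) $$ (i,j) = (\<Sum>a<D. (A ^\<^sub>m k) $$ (i,a) * A $$ (a,j))"
    unfolding pow_mat.simps(2) by (rule mult_entry) (use A Suc.prems in auto)
  also have "cmod \<dots> \<le> (\<Sum>a<D. cmod ((A ^\<^sub>m k) $$ (i,a)) * cmod (A $$ (a,j)))"
    by (rule order.trans[OF norm_sum]) (simp add: norm_mult)
  also have "\<dots> \<le> (\<Sum>a<D. (real D * bnd A) ^ k * bnd A)"
    using Suc.prems by (intro sum_mono mult_mono Suc.IH bnd_ge[OF A]) (auto simp: bnd_nonneg)
  also have "\<dots> = (real D * bnd A) ^ Suc k" by (simp add: algebra_simps)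
  finally show ?case .
qed

lemma pow_entry_summable:
  fixes A :: "complex mat"
  assumes A: "A \<in> carrier_mat D D" and ij: "i < D" "j < D"
  shows "summable (\<lambda>k. norm ((A ^\<^sub>m k) $$ (i,j) / of_nat (fact k)))"
proof (rule summable_comparison_test[OF _ summable_exp[of "real D * bnd A"]])
  show "\<exists>N. \<forall>k\<ge>N. norm (norm ((A ^\<^sub>m k) $$ (i,j) / of_nat (fact k))) \<le> inverse (fact k) * (real D * bnd A) ^ k"
  proof (intro exI[of _ 0] allI impI)
    fix k :: nat
    have "norm ((A ^\<^sub>m k) $$ (i,j) / of_nat (fact k)) = cmod ((A ^\<^sub>m k) $$ (i,j)) / fact k"
      by (simp add: norm_divide)
    also have "\<dots> \<le> (real D * bnd A) ^ k / fact k"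
      using pow_entry_bound[OF A ij] by (intro divide_right_mono) auto
    finally show "norm (norm ((A ^\<^sub>m k) $$ (i,j) / of_nat (fact k))) \<le> inverse (fact k) * (real D * bnd A) ^ k" by (simp add: field_simps)
  qed
qed

lemma pow_entry_summable':
  fixes A :: "complex mat"
  assumes A: "A \<in> carrier_mat D D" and ij: "i < D" "j < D"
  shows "summable (\<lambda>k. (A ^\<^sub>m k) $$ (i,j) / of_nat (fact k))"
  using summable_norm_cancel[OF pow_entry_summable[OF assms]] .



lemma mexp_entry:
  "A \<in> carrier_mat D D \<Longrightarrow> i < D \<Longrightarrow> j < D \<Longrightarrow>
   mexp A $$ (i,j) = (\<Sum>k. (A ^\<^sub>m k) $$ (i,j) / of_nat (fact k))"
  by (simp add: mexp_def)

lemma mexp_carrier[simp]: "A \<in> carrier_mat D D \<Longrightarrow> mexp A \<in> carrier_mat D D"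
  by (simp add: mexp_def)

lemma pow_intertwine:
  fixes A :: "'a::semiring_1 mat"
  assumes A: "A \<in> carrier_mat D D" and P: "P \<in> carrier_mat D d" and K: "K \<in> carrier_mat d d"
    and AP: "A * P = P * K"
  shows "A ^\<^sub>m k * P = P * K ^\<^sub>m k"
proof (induction k)
  case 0 then show ?case using A P K by simp
next
  case (Suc k)
  have "A ^\<^sub>m Suc k * P = A ^\<^sub>m k * (A * P)" using A P by (simp add: assoc_mult_mat[of _ D D _ D _ d])
  also have "\<dots> = (A ^\<^sub>m k * P) * K" using A P K by (simp add: AP assoc_mult_mat[of _ D D _ d _ d])
  also have "\<dots> = P * (K ^\<^sub>m k * K)" using Suc P K by (simp add: assoc_mult_mat[of _ D d _ d _ d])
  finally show ?case by simp
qed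

lemma mexp_intertwine:
  fixes A :: "complex mat"
  assumes A: "A \<in> carrier_mat D D" and P: "P \<in> carrier_mat D d" and K: "K \<in> carrier_mat d d"
    and AP: "A * P = P * K"
  shows "mexp A * P = P * mexp K"
proof (rule eq_matI)
  fix i j assume "i < dim_row (P * mexp K)" "j < dim_col (P * mexp K)"
  then have i: "i < D" and j: "j < d" using P K by (auto simp: mexp_def)
  have "(mexp A * P) $$ (i,j) = (\<Sum>a<D. mexp A $$ (i,a) * P $$ (a,j))"
    using A P i j by (intro mult_entry) auto
  also have "\<dots> = (\<Sum>a<D. \<Sum>k. (A ^\<^sub>m k) $$ (i,a) / of_nat (fact k) * P $$ (a,j))"
  proof (intro sum.cong refl)
    fix a assume "a \<in> {..<D}"
    then have a: "a < D" by simp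
    show "mexp A $$ (i,a) * P $$ (a,j) = (\<Sum>k. (A ^\<^sub>m k) $$ (i,a) / of_nat (fact k) * P $$ (a,j))"
      unfolding mexp_entry[OF A i a] by (rule suminf_mult2[OF pow_entry_summable'[OF A i a]])
  qed
  also have "\<dots> = (\<Sum>k. \<Sum>a<D. (A ^\<^sub>m k) $$ (i,a) / of_nat (fact k) * P $$ (a,j))"
    using A i by (intro suminf_sum[symmetric] summable_mult2 pow_entry_summable') auto
  also have "\<dots> = (\<Sum>k. (A ^\<^sub>m k * P) $$ (i,j) / of_nat (fact k))"
    by (intro suminf_cong, subst mult_entry[OF pow_carrier_mat[OF A] P i j]) (simp add: sum_divide_distrib)
  also have "\<dots> = (\<Sum>k. (P * K ^\<^sub>m k) $$ (i,j) / of_nat (fact k))"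
    by (simp add: pow_intertwine[OF A P K AP])
  also have "\<dots> = (\<Sum>k. \<Sum>b<d. P $$ (i,b) * ((K ^\<^sub>m k) $$ (b,j) / of_nat (fact k)))"
    by (intro suminf_cong, subst mult_entry[OF P pow_carrier_mat[OF K] i j]) (simp add: sum_divide_distrib)
  also have "\<dots> = (\<Sum>b<d. \<Sum>k. P $$ (i,b) * ((K ^\<^sub>m k) $$ (b,j) / of_nat (fact k)))"
    using K j by (intro suminf_sum summable_mult pow_entry_summable') auto
  also have "\<dots> = (\<Sum>b<d. P $$ (i,b) * mexp K $$ (b,j))"
  proof (intro sum.cong refl)
    fix b assume "b \<in> {..<d}"
    then have b: "b < d" by simp
    show "(\<Sum>k. P $$ (i,b) * ((K ^\<^sub>m k) $$ (b,j) / of_nat (fact k))) = P $$ (i,b) * mexp K $$ (b,j)"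
      unfolding mexp_entry[OF K b j] by (rule suminf_mult[OF pow_entry_summable'[OF K b j]])
  qed
  also have "\<dots> = (P * mexp K) $$ (i,j)"
    using K P i j by (intro mult_entry[symmetric]) auto
  finally show "(mexp A * P) $$ (i,j) = (P * mexp K) $$ (i,j)" .
qed (use A P K in \<open>auto simp: mexp_def\<close>)



lemma pascal_sum:
  fixes f :: "nat \<Rightarrow> complex"
  shows "(\<Sum>p\<le>k. of_nat (k choose p) * c^(k-p) * f (Suc p)) + c * (\<Sum>p\<le>k. of_nat (k choose p) * c^(k-p) * f p)
       = (\<Sum>p\<le>Suc k. of_nat (Suc k choose p) * c^(Suc k - p) * f p)"
proof -
  have R: "(\<Sum>p\<le>Suc k. of_nat (Suc k choose p) * c^(Suc k - p) * f p)
     = c^Suc k * f 0 + (\<Sum>p\<le>k. of_nat (k choose p) * c^(k-p) * f (Suc p))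
        + (\<Sum>p\<le>k. of_nat (k choose Suc p) * c^(k-p) * f (Suc p))"
    by (subst sum.atMost_Suc_shift) (simp add: sum.distrib algebra_simps)
  have "c * (\<Sum>p\<le>k. of_nat (k choose p) * c^(k-p) * f p) = (\<Sum>p\<le>k. of_nat (k choose p) * c^(Suc k-p) * f p)"
    by (simp add: sum_distrib_left algebra_simps Suc_diff_le)
  also have "\<dots> = (\<Sum>p\<le>Suc k. of_nat (k choose p) * c^(Suc k-p) * f p)"
    by simp
  also have "\<dots> = c^Suc k * f 0 + (\<Sum>p\<le>k. of_nat (k choose Suc p) * c^(k-p) * f (Suc p))"
    by (subst sum.atMost_Suc_shift) simp
  finally show ?thesis using R by simp
qed

lemma pow_shift_entry:
  fixes A :: "complex mat"
  assumes A: "A \<in> carrier_mat D D" and i: "i < D"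
  shows "j < D \<Longrightarrow> ((A + c \<cdot>\<^sub>m 1\<^sub>m D) ^\<^sub>m k) $$ (i,j) = (\<Sum>p\<le>k. of_nat (k choose p) * c^(k-p) * (A ^\<^sub>m p) $$ (i,j))"
proof (induction k arbitrary: j)
  case 0 then show ?case using A i by simp
next
  case (Suc k)
  let ?M = "A + c \<cdot>\<^sub>m 1\<^sub>m D"
  have M: "?M \<in> carrier_mat D D" using A by simp
  have "(?M ^\<^sub>m Suc k) $$ (i,j) = (\<Sum>a<D. (?M ^\<^sub>m k) $$ (i,a) * ?M $$ (a,j))"
    unfolding pow_mat.simps(2) by (rule mult_entry) (use M i Suc.prems in auto)
  also have "\<dots> = (\<Sum>a<D. (?M ^\<^sub>m k) $$ (i,a) * A $$ (a,j)) + c * (?M ^\<^sub>m k) $$ (i,j)"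
  proof -
    have "(\<Sum>a<D. (?M ^\<^sub>m k) $$ (i,a) * ?M $$ (a,j))
       = (\<Sum>a<D. (?M ^\<^sub>m k) $$ (i,a) * A $$ (a,j) + (if a = j then c * (?M ^\<^sub>m k) $$ (i,a) else 0))"
      using A Suc.prems by (intro sum.cong refl) (auto simp: algebra_simps)
    also have "\<dots> = (\<Sum>a<D. (?M ^\<^sub>m k) $$ (i,a) * A $$ (a,j)) + c * (?M ^\<^sub>m k) $$ (i,j)"
      using Suc.prems by (simp add: sum.distrib)
    finally show ?thesis .
  qed
  also have "(\<Sum>a<D. (?M ^\<^sub>m k) $$ (i,a) * A $$ (a,j))
      = (\<Sum>a<D. \<Sum>p\<le>k. of_nat (k choose p) * c^(k-p) * ((A ^\<^sub>m p) $$ (i,a) * A $$ (a,j)))"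
    by (intro sum.cong refl) (simp add: Suc.IH sum_distrib_left sum_distrib_right mult_ac)
  also have "\<dots> = (\<Sum>p\<le>k. of_nat (k choose p) * c^(k-p) * (\<Sum>a<D. (A ^\<^sub>m p) $$ (i,a) * A $$ (a,j)))"
    by (subst sum.swap) (simp add: sum_distrib_left)
  also have "\<dots> = (\<Sum>p\<le>k. of_nat (k choose p) * c^(k-p) * (A ^\<^sub>m Suc p) $$ (i,j))"
  proof (intro sum.cong refl)
    fix p
    have "(A ^\<^sub>m Suc p) $$ (i,j) = (\<Sum>a<D. (A ^\<^sub>m p) $$ (i,a) * A $$ (a,j))"
      unfolding pow_mat.simps(2) by (rule mult_entry) (use A i Suc.prems in auto)
    then show "of_nat (k choose p) * c^(k-p) * (\<Sum>a<D. (A ^\<^sub>m p) $$ (i,a) * A $$ (a,j))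
       = of_nat (k choose p) * c^(k-p) * (A ^\<^sub>m Suc p) $$ (i,j)" by simp
  qed
  also have "c * (?M ^\<^sub>m k) $$ (i,j) = c * (\<Sum>p\<le>k. of_nat (k choose p) * c^(k-p) * (A ^\<^sub>m p) $$ (i,j))"
    using Suc.IH Suc.prems by simp
  finally show ?case using pascal_sum[of k c "\<lambda>p. (A ^\<^sub>m p) $$ (i,j)"] by simp
qed

lemma exp_series: "(\<Sum>n. c ^ n / of_nat (fact n)) = exp (c::complex)"
proof -
  have "(\<lambda>n. c^n /\<^sub>R fact n) sums exp c" by (rule exp_converges)
  then have "(\<lambda>n. c ^ n / of_nat (fact n)) sums exp c"
    by (simp add: scaleR_conv_of_real divide_inverse mult.commute)
  then show ?thesis by (rule sums_unique[symmetric])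
qed

lemma mexp_shift:
  fixes A :: "complex mat"
  assumes A: "A \<in> carrier_mat D D"
  shows "mexp (A + c \<cdot>\<^sub>m 1\<^sub>m D) = exp c \<cdot>\<^sub>m mexp A"
proof (rule eq_matI)
  fix i j assume "i < dim_row (exp c \<cdot>\<^sub>m mexp A)" "j < dim_col (exp c \<cdot>\<^sub>m mexp A)"
  then have i: "i < D" and j: "j < D" using A by (auto simp: mexp_def)
  let ?a = "\<lambda>p. (A ^\<^sub>m p) $$ (i,j) / of_nat (fact p)"
  let ?b = "\<lambda>q. c ^ q / of_nat (fact q)"
  have sa: "summable (\<lambda>k. norm (?a k))" by (rule pow_entry_summable[OF A i j])
  have sb: "summable (\<lambda>k. norm (?b k))"
  proof -
    have "summable (\<lambda>k. inverse (fact k) * (cmod c) ^ k)" by (rule summable_exp)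
    moreover have "\<And>k. norm (?b k) = inverse (fact k) * (cmod c) ^ k"
      by (simp add: norm_divide norm_power divide_inverse mult.commute norm_mult norm_inverse)
    ultimately show ?thesis by simp
  qed
  have "mexp (A + c \<cdot>\<^sub>m 1\<^sub>m D) $$ (i,j)
      = (\<Sum>k. ((A + c \<cdot>\<^sub>m 1\<^sub>m D) ^\<^sub>m k) $$ (i,j) / of_nat (fact k))"
    using A i j by (intro mexp_entry) auto
  also have "\<dots> = (\<Sum>k. \<Sum>p\<le>k. ?a p * ?b (k - p))"
  proof (intro suminf_cong)
    fix k
    have "((A + c \<cdot>\<^sub>m 1\<^sub>m D) ^\<^sub>m k) $$ (i,j) / of_nat (fact k)
       = (\<Sum>p\<le>k. of_nat (k choose p) * c^(k-p) * (A ^\<^sub>m p) $$ (i,j) / of_nat (fact k))"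
      by (simp add: pow_shift_entry[OF A i j] sum_divide_distrib)
    also have "\<dots> = (\<Sum>p\<le>k. ?a p * ?b (k - p))"
    proof (intro sum.cong refl)
      fix p assume "p \<in> {..k}"
      then have pk: "p \<le> k" by simp
      have "(of_nat (k choose p) :: complex) = fact k / (fact p * fact (k - p))"
        by (rule binomial_fact[OF pk])
      then show "of_nat (k choose p) * c^(k-p) * (A ^\<^sub>m p) $$ (i,j) / of_nat (fact k) = ?a p * ?b (k - p)"
        by (simp add: field_simps)
    qed
    finally show "((A + c \<cdot>\<^sub>m 1\<^sub>m D) ^\<^sub>m k) $$ (i,j) / of_nat (fact k) = (\<Sum>p\<le>k. ?a p * ?b (k - p))" .
  qed
  also have "\<dots> = (\<Sum>k. ?a k) * (\<Sum>k. ?b k)"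
    by (rule Cauchy_product[OF sa sb, symmetric])
  also have "\<dots> = mexp A $$ (i,j) * exp c"
    using mexp_entry[OF A i j] exp_series[of c] by simp
  finally show "mexp (A + c \<cdot>\<^sub>m 1\<^sub>m D) $$ (i,j) = (exp c \<cdot>\<^sub>m mexp A) $$ (i,j)"
    using A i j by (simp add: mexp_def)
qed (use A in \<open>auto simp: mexp_def\<close>)



lemma pow_smult_mat:
  fixes A :: "complex mat"
  assumes A: "A \<in> carrier_mat d d"
  shows "(s \<cdot>\<^sub>m A) ^\<^sub>m k = s ^ k \<cdot>\<^sub>m A ^\<^sub>m k"
proof (induction k)
  case 0 then show ?case using A by (auto intro!: eq_matI)
next
  case (Suc k)
  have "(s \<cdot>\<^sub>m A) ^\<^sub>m Suc k = (s ^ k \<cdot>\<^sub>m A ^\<^sub>m k) * (s \<cdot>\<^sub>m A)" using Suc by simp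
  also have "\<dots> = s ^ Suc k \<cdot>\<^sub>m (A ^\<^sub>m k * A)"
    using A by (auto intro!: eq_matI simp: scalar_prod_def sum_distrib_left algebra_simps)
  finally show ?case by simp
qed

lemma pow_mat_Suc_left:
  fixes A :: "complex mat"
  assumes A: "A \<in> carrier_mat d d"
  shows "A ^\<^sub>m Suc k = A * A ^\<^sub>m k"
proof (induction k)
  case 0 then show ?case using A by simp
next
  case (Suc k)
  have "A ^\<^sub>m Suc (Suc k) = (A * A ^\<^sub>m k) * A" using Suc by simp
  also have "\<dots> = A * (A ^\<^sub>m k * A)" using A by (simp add: assoc_mult_mat[of _ d d _ d _ d])
  finally show ?case by simp
qed

lemma pow_sym_real:
  fixes H :: "complex mat"
  assumes H: "H \<in> carrier_mat d d"
    and sym: "\<And>p q. p < d \<Longrightarrow> q < d \<Longrightarrow> H $$ (p,q) = H $$ (q,p)"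
    and re: "\<And>p q. p < d \<Longrightarrow> q < d \<Longrightarrow> cnj (H $$ (p,q)) = H $$ (p,q)"
  shows "p < d \<Longrightarrow> q < d \<Longrightarrow> (H ^\<^sub>m k) $$ (p,q) = (H ^\<^sub>m k) $$ (q,p) \<and> cnj ((H ^\<^sub>m k) $$ (p,q)) = (H ^\<^sub>m k) $$ (p,q)"
proof (induction k arbitrary: p q)
  case 0 then show ?case using H by simp
next
  case (Suc k)
  have e1: "(H ^\<^sub>m Suc k) $$ (p,q) = (\<Sum>a<d. (H ^\<^sub>m k) $$ (p,a) * H $$ (a,q))"
    unfolding pow_mat.simps(2) by (rule mult_entry) (use H Suc.prems in auto)
  have e2: "(H ^\<^sub>m Suc k) $$ (q,p) = (\<Sum>a<d. H $$ (q,a) * (H ^\<^sub>m k) $$ (a,p))"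
    unfolding pow_mat_Suc_left[OF H] by (rule mult_entry) (use H Suc.prems in auto)
  have "(H ^\<^sub>m Suc k) $$ (p,q) = (H ^\<^sub>m Suc k) $$ (q,p)"
    unfolding e1 e2 using Suc.IH Suc.prems sym by (intro sum.cong refl) auto
  moreover have "cnj ((H ^\<^sub>m Suc k) $$ (p,q)) = (H ^\<^sub>m Suc k) $$ (p,q)"
    unfolding e1 using Suc.IH Suc.prems re by (simp add: cnj_sum)
  ultimately show ?case by simp
qed

lemma suminf_cnj': "summable f \<Longrightarrow> (\<Sum>n. cnj (f n)) = cnj (suminf f)"
  by (metis sums_cnj summable_sums sums_unique)

lemma mexp_conj_sym:
  fixes H :: "complex mat"
  assumes H: "H \<in> carrier_mat d d"
    and sym: "\<And>p q. p < d \<Longrightarrow> q < d \<Longrightarrow> H $$ (p,q) = H $$ (q,p)"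
    and re: "\<And>p q. p < d \<Longrightarrow> q < d \<Longrightarrow> cnj (H $$ (p,q)) = H $$ (p,q)"
    and pq: "p < d" "q < d"
  shows "mexp (cnj s \<cdot>\<^sub>m H) $$ (p,q) = cnj (mexp (s \<cdot>\<^sub>m H) $$ (q,p))"
proof -
  have sH: "s \<cdot>\<^sub>m H \<in> carrier_mat d d" "cnj s \<cdot>\<^sub>m H \<in> carrier_mat d d" using H by auto
  have "mexp (cnj s \<cdot>\<^sub>m H) $$ (p,q) = (\<Sum>k. cnj s ^ k * (H ^\<^sub>m k) $$ (p,q) / of_nat (fact k))"
    using mexp_entry[OF sH(2) pq] pow_smult_mat[OF H] pq H by simp
  also have "\<dots> = (\<Sum>k. cnj (s ^ k * (H ^\<^sub>m k) $$ (q,p) / of_nat (fact k)))"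
    using pow_sym_real[OF H sym re pq] pow_sym_real[OF H sym re pq(2) pq(1)] by simp
  also have "\<dots> = cnj (\<Sum>k. s ^ k * (H ^\<^sub>m k) $$ (q,p) / of_nat (fact k))"
  proof (rule suminf_cnj')
    have "summable (\<lambda>k. ((s \<cdot>\<^sub>m H) ^\<^sub>m k) $$ (q,p) / of_nat (fact k))"
      by (rule pow_entry_summable'[OF sH(1) pq(2) pq(1)])
    then show "summable (\<lambda>k. s ^ k * (H ^\<^sub>m k) $$ (q,p) / of_nat (fact k))"
      using pow_smult_mat[OF H] pq H by simp
  qed
  also have "\<dots> = cnj (mexp (s \<cdot>\<^sub>m H) $$ (q,p))"
    using mexp_entry[OF sH(1) pq(2) pq(1)] pow_smult_mat[OF H] pq H by simp
  finally show ?thesis .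
qed

lemma mexp_1x1: "mexp (mat 1 1 (\<lambda>_. x)) $$ (0,0) = exp x"
proof -
  have "(mat 1 1 (\<lambda>_. x) ^\<^sub>m k) $$ (0,0) = x ^ k" for k
  proof (induction k)
    case (Suc k)
    have "(mat 1 1 (\<lambda>_. x) ^\<^sub>m Suc k) $$ (0,0) = (mat 1 1 (\<lambda>_. x) ^\<^sub>m k) $$ (0,0) * x"
      unfolding pow_mat.simps(2) by (subst mult_entry[of _ 1 1 _ 1]) auto
    then show ?case using Suc by simp
  qed simp
  then show ?thesis using exp_series[of x] by (simp add: mexp_def)
qed



lemma bitk_bit: "bitk b k = (if bit b k then 1 else 0)"
  by (simp add: bitk_def bit_iff_odd odd_iff_mod_2_eq_one even_iff_mod_2_eq_zero)

lemma lt_pow_iff: "(x::nat) < 2 ^ N \<longleftrightarrow> (\<forall>l. bit x l \<longrightarrow> l < N)"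
proof -
  have "x < 2 ^ N \<longleftrightarrow> take_bit N x = x" by (simp add: take_bit_nat_eq_self_iff)
  also have "\<dots> \<longleftrightarrow> (\<forall>l. bit x l \<longrightarrow> l < N)"
    by (auto simp: bit_eq_iff[of "take_bit N x" x] bit_take_bit_iff)
  finally show ?thesis .
qed

lemma eq_iff_bits: "(i::nat) < 2 ^ N \<Longrightarrow> j < 2 ^ N \<Longrightarrow> i = j \<longleftrightarrow> (\<forall>l<N. bit i l = bit j l)"
  unfolding lt_pow_iff by (auto simp: bit_eq_iff[of i j])

lemma set_bit_lt: "k < N \<Longrightarrow> (b::nat) < 2 ^ N \<Longrightarrow> set_bit k b < 2 ^ N"
  unfolding lt_pow_iff by (auto simp: bit_set_bit_iff)

lemma unset_bit_lt: "(b::nat) < 2 ^ N \<Longrightarrow> unset_bit k b < 2 ^ N"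
  unfolding lt_pow_iff by (auto simp: bit_unset_bit_iff)

lemma site_op_carrier[simp]: "site_op N k A \<in> carrier_mat (2^N) (2^N)"
  by (simp add: site_op_def)

lemma mat_col_unit:
  fixes M :: "complex mat"
  assumes "M \<in> carrier_mat D D" "b < D" "i < D"
  shows "(M *\<^sub>v unit_vec D b) $ i = M $$ (i,b)"
  using assms by (subst mv_entry[OF assms(1) _ assms(3)]) (auto simp: unit_vec_def if_distrib cong: if_cong)

lemma if01_eq: "((if P then (1::nat) else 0) = (if Q then 1 else 0)) = (P = Q)" by auto

lemma site_op_col:
  assumes k: "k < N" and b: "b < 2^N" and i: "i < 2^N"
  shows "(site_op N k A *\<^sub>v unit_vec (2^N) b) $ i
     = (if i = unset_bit k b then A $$ (0, bitk b k) else 0) + (if i = set_bit k b then A $$ (1, bitk b k) else 0)"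
proof -
  have e: "(site_op N k A *\<^sub>v unit_vec (2^N) b) $ i = site_op N k A $$ (i,b)"
    by (rule mat_col_unit) (use b i in auto)
  have us: "unset_bit k b \<noteq> set_bit k b"
  proof -
    have "bit (set_bit k b) k" by (simp add: bit_set_bit_iff)
    moreover have "\<not> bit (unset_bit k b) k" by (simp add: bit_unset_bit_iff)
    ultimately show ?thesis by metis
  qed
  have u: "i = unset_bit k b \<longleftrightarrow> \<not> bit i k \<and> (\<forall>l<N. l \<noteq> k \<longrightarrow> bit i l = bit b l)"
    unfolding eq_iff_bits[OF i unset_bit_lt[OF b]] bit_unset_bit_iff using k by blast
  have s: "i = set_bit k b \<longleftrightarrow> bit i k \<and> (\<forall>l<N. l \<noteq> k \<longrightarrow> bit i l = bit b l)"
    unfolding eq_iff_bits[OF i set_bit_lt[OF k b]] bit_set_bit_iff using k possible_bit_nat by blast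
  have E: "site_op N k A $$ (i,b) = (if (\<forall>l<N. l \<noteq> k \<longrightarrow> bit i l = bit b l) then A $$ (bitk i k, bitk b k) else 0)"
    unfolding site_op_def index_mat[OF i b] case_prod_conv bitk_bit[of i] bitk_bit[of b] if01_eq ..
  show ?thesis
  proof (cases "bit i k")
    case True
    then have "i \<noteq> unset_bit k b" "(i = set_bit k b) = (\<forall>l<N. l \<noteq> k \<longrightarrow> bit i l = bit b l)" "bitk i k = 1"
      using u s by (auto simp: bitk_bit)
    then show ?thesis unfolding e E by auto
  next
    case False
    then have "i \<noteq> set_bit k b" "(i = unset_bit k b) = (\<forall>l<N. l \<noteq> k \<longrightarrow> bit i l = bit b l)" "bitk i k = 0"
      using u s by (auto simp: bitk_bit)
    then show ?thesis unfolding e E by auto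
  qed
qed



definition amat :: "complex mat" where "amat = mat_of_rows_list 2 [[0, 0], [1, 0]]"
definition adag :: "complex mat" where "adag = mat_of_rows_list 2 [[0, 1], [0, 0]]"

lemma set_bit_same: "bit (b::nat) k \<Longrightarrow> set_bit k b = b"
  by (simp add: set_bit_eq)
lemma unset_bit_same: "\<not> bit (b::nat) k \<Longrightarrow> unset_bit k b = b"
  by (rule bit_eqI) (auto simp: bit_unset_bit_iff)

lemma dim_site_op[simp]: "dim_row (site_op N k A) = 2^N" "dim_col (site_op N k A) = 2^N"
  by (simp_all add: site_op_def)

lemma op_unit_gen:
  assumes k: "k < N" and b: "b < 2^N"
  shows "site_op N k A *\<^sub>v unit_vec (2^N) b =
    (if bit b k then A $$ (0,1) \<cdot>\<^sub>v unit_vec (2^N) (unset_bit k b) + A $$ (1,1) \<cdot>\<^sub>v unit_vec (2^N) b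
     else A $$ (0,0) \<cdot>\<^sub>v unit_vec (2^N) b + A $$ (1,0) \<cdot>\<^sub>v unit_vec (2^N) (set_bit k b))"
proof (rule eq_vecI)
  fix i assume "i < dim_vec (if bit b k then A $$ (0,1) \<cdot>\<^sub>v unit_vec (2^N) (unset_bit k b) + A $$ (1,1) \<cdot>\<^sub>v unit_vec (2^N) b
     else A $$ (0,0) \<cdot>\<^sub>v unit_vec (2^N) b + A $$ (1,0) \<cdot>\<^sub>v unit_vec (2^N) (set_bit k b))"
  then have i: "i < 2^N" by (auto split: if_splits)
  have ul: "unset_bit k b < 2^N" and sl: "set_bit k b < 2^N" using set_bit_lt[OF k b] unset_bit_lt[OF b] by auto
  show "(site_op N k A *\<^sub>v unit_vec (2^N) b) $ i = (if bit b k then A $$ (0,1) \<cdot>\<^sub>v unit_vec (2^N) (unset_bit k b) + A $$ (1,1) \<cdot>\<^sub>v unit_vec (2^N) b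
     else A $$ (0,0) \<cdot>\<^sub>v unit_vec (2^N) b + A $$ (1,0) \<cdot>\<^sub>v unit_vec (2^N) (set_bit k b)) $ i"
    unfolding site_op_col[OF k b i] using i ul sl b
    by (cases "bit b k") (auto simp: bitk_bit set_bit_same unset_bit_same)
qed (auto)

lemmas pauli_defs = pauli_x_def pauli_y_def pauli_z_def amat_def adag_def mat_of_rows_list_def

lemma sx_unit: "k < N \<Longrightarrow> b < 2^N \<Longrightarrow> site_op N k pauli_x *\<^sub>v unit_vec (2^N) b
   = unit_vec (2^N) (if bit b k then unset_bit k b else set_bit k b)"
  by (subst op_unit_gen) (auto simp: pauli_defs intro!: eq_vecI)

lemma sy_unit: "k < N \<Longrightarrow> b < 2^N \<Longrightarrow> site_op N k pauli_y *\<^sub>v unit_vec (2^N) b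
   = (if bit b k then - \<i> else \<i>) \<cdot>\<^sub>v unit_vec (2^N) (if bit b k then unset_bit k b else set_bit k b)"
  by (subst op_unit_gen) (auto simp: pauli_defs intro!: eq_vecI)

lemma sz_unit: "k < N \<Longrightarrow> b < 2^N \<Longrightarrow> site_op N k pauli_z *\<^sub>v unit_vec (2^N) b
   = (if bit b k then - 1 else 1) \<cdot>\<^sub>v unit_vec (2^N) b"
  by (subst op_unit_gen) (auto simp: pauli_defs intro!: eq_vecI)

lemma a_unit: "k < N \<Longrightarrow> b < 2^N \<Longrightarrow> site_op N k amat *\<^sub>v unit_vec (2^N) b
   = (if bit b k then 0\<^sub>v (2^N) else unit_vec (2^N) (set_bit k b))"
  by (subst op_unit_gen) (auto simp: pauli_defs intro!: eq_vecI)

lemma adag_unit: "k < N \<Longrightarrow> b < 2^N \<Longrightarrow> site_op N k adag *\<^sub>v unit_vec (2^N) b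
   = (if bit b k then unit_vec (2^N) (unset_bit k b) else 0\<^sub>v (2^N))"
  by (subst op_unit_gen) (auto simp: pauli_defs intro!: eq_vecI)

lemma site_op_entry: "i < 2^N \<Longrightarrow> j < 2^N \<Longrightarrow> site_op N k A $$ (i,j) =
  (if (\<forall>l<N. l \<noteq> k \<longrightarrow> bitk i l = bitk j l) then A $$ (bitk i k, bitk j k) else 0)"
  by (simp add: site_op_def)

lemma bitk_cases: "bitk i k = 0 \<or> bitk i k = 1"
  by (simp add: bitk_bit)

lemma a_op_site: "a_op m n j = sig m n amat j"
proof (rule eq_matI)
  fix i ja assume "i < dim_row (sig m n amat j)" "ja < dim_col (sig m n amat j)"
  then have ij: "i < 2^nsites m n" "ja < 2^nsites m n" by (auto simp: sig_def)
  show "a_op m n j $$ (i,ja) = sig m n amat j $$ (i,ja)"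
    using ij bitk_cases[of i "nat (j - m)"] bitk_cases[of ja "nat (j - m)"]
    by (auto simp: a_op_def sig_def site_op_entry pauli_defs)
qed (auto simp: a_op_def sig_def)

lemma a_star_site: "a_star m n j = sig m n adag j"
proof (rule eq_matI)
  fix i ja assume "i < dim_row (sig m n adag j)" "ja < dim_col (sig m n adag j)"
  then have ij: "i < 2^nsites m n" "ja < 2^nsites m n" by (auto simp: sig_def)
  show "a_star m n j $$ (i,ja) = sig m n adag j $$ (i,ja)"
    using ij bitk_cases[of i "nat (j - m)"] bitk_cases[of ja "nat (j - m)"]
    by (auto simp: a_star_def sig_def site_op_entry pauli_defs)
qed (auto simp: a_star_def sig_def)



definition flip :: "nat \<Rightarrow> nat \<Rightarrow> nat" where
  "flip k b = (if bit b k then unset_bit k b else set_bit k b)"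

lemma flip_lt: "k < N \<Longrightarrow> b < 2^N \<Longrightarrow> flip k b < 2^N"
  by (simp add: flip_def set_bit_lt unset_bit_lt)

lemma bit_flip: "bit (flip k b) l = (if l = k then \<not> bit b k else bit b l)"
  by (auto simp: flip_def bit_set_bit_iff bit_unset_bit_iff)

definition hop :: "nat \<Rightarrow> nat \<Rightarrow> complex mat" where
  "hop N k = site_op N k pauli_x * site_op N (Suc k) pauli_x + site_op N k pauli_y * site_op N (Suc k) pauli_y"

lemma hop_carrier[simp]: "hop N k \<in> carrier_mat (2^N) (2^N)"
  unfolding hop_def by (intro add_carrier_mat mult_carrier_mat[of _ "2^N" "2^N"] site_op_carrier)

lemma sx_unit': "k < N \<Longrightarrow> b < 2^N \<Longrightarrow> site_op N k pauli_x *\<^sub>v unit_vec (2^N) b = unit_vec (2^N) (flip k b)"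
  using sx_unit by (simp add: flip_def)

lemma sy_unit': "k < N \<Longrightarrow> b < 2^N \<Longrightarrow> site_op N k pauli_y *\<^sub>v unit_vec (2^N) b
   = (if bit b k then - \<i> else \<i>) \<cdot>\<^sub>v unit_vec (2^N) (flip k b)"
  using sy_unit by (simp add: flip_def)

lemma hop_unit:
  assumes k: "Suc k < N" and b: "b < 2^N"
  shows "hop N k *\<^sub>v unit_vec (2^N) b =
     (if bit b k = bit b (Suc k) then 0\<^sub>v (2^N) else 2 \<cdot>\<^sub>v unit_vec (2^N) (flip k (flip (Suc k) b)))"
proof -
  let ?D = "2^N :: nat"
  have k': "k < N" using k by simp
  have f1: "flip (Suc k) b < ?D" by (rule flip_lt[OF k b])
  have f2: "flip k (flip (Suc k) b) < ?D" by (rule flip_lt[OF k' f1])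
  have bk: "bit (flip (Suc k) b) k = bit b k" by (simp add: bit_flip)
  have "hop N k *\<^sub>v unit_vec ?D b =
        site_op N k pauli_x *\<^sub>v (site_op N (Suc k) pauli_x *\<^sub>v unit_vec ?D b)
      + site_op N k pauli_y *\<^sub>v (site_op N (Suc k) pauli_y *\<^sub>v unit_vec ?D b)"
    unfolding hop_def
    by (subst add_mult_distrib_mat_vec[of _ ?D ?D]) (auto simp: assoc_mult_mat_vec[of _ ?D ?D _ ?D])
  also have "\<dots> = unit_vec ?D (flip k (flip (Suc k) b))
      + ((if bit b (Suc k) then - \<i> else \<i>) * (if bit b k then - \<i> else \<i>)) \<cdot>\<^sub>v unit_vec ?D (flip k (flip (Suc k) b))"
    using k k' b f1 bk
    by (simp add: sx_unit' sy_unit' mult_mat_vec[of _ ?D ?D] smult_smult_assoc)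
  also have "\<dots> = (if bit b k = bit b (Suc k) then 0\<^sub>v ?D else 2 \<cdot>\<^sub>v unit_vec ?D (flip k (flip (Suc k) b)))"
    by (rule eq_vecI) auto
  finally show ?thesis .
qed

definition st :: "nat \<Rightarrow> nat \<Rightarrow> nat" where "st N j = unset_bit j (mask N)"

lemma bit_mask_nat: "bit (mask N :: nat) l \<longleftrightarrow> l < N"
  by (simp add: bit_mask_iff)

lemma bit_st: "bit (st N j) l \<longleftrightarrow> l < N \<and> l \<noteq> j"
  by (auto simp: st_def bit_unset_bit_iff bit_mask_nat)

lemma mask_lt: "(mask N :: nat) < 2^N" by simp

lemma st_lt: "st N j < 2^N"
  unfolding st_def by (rule unset_bit_lt[OF mask_lt])

lemma st_inj: "i < N \<Longrightarrow> j < N \<Longrightarrow> st N i = st N j \<longleftrightarrow> i = j"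
proof
  assume ij: "i < N" "j < N" and eq: "st N i = st N j"
  from eq have "bit (st N i) i = bit (st N j) i" by simp
  then show "i = j" using ij unfolding bit_st by auto
qed simp

lemma st_ne_mask: "j < N \<Longrightarrow> st N j \<noteq> mask N"
proof
  assume j: "j < N" and eq: "st N j = mask N"
  from eq have "bit (st N j) j = bit (mask N :: nat) j" by simp
  then show False using j unfolding bit_st bit_mask_nat by auto
qed

lemma hop_mask: "Suc k < N \<Longrightarrow> hop N k *\<^sub>v unit_vec (2^N) (mask N) = 0\<^sub>v (2^N)"
  by (subst hop_unit) (auto simp: bit_mask_nat)

lemma flip_st1: "Suc j < N \<Longrightarrow> flip j (flip (Suc j) (st N j)) = st N (Suc j)"
  by (rule bit_eqI) (auto simp: bit_flip bit_st)

lemma flip_st2: "Suc k < N \<Longrightarrow> flip k (flip (Suc k) (st N (Suc k))) = st N k"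
  by (rule bit_eqI) (auto simp: bit_flip bit_st)

lemma hop_st:
  assumes "Suc k < N" "j < N"
  shows "hop N k *\<^sub>v unit_vec (2^N) (st N j) =
    (if k = j then 2 \<cdot>\<^sub>v unit_vec (2^N) (st N (Suc j))
     else if Suc k = j then 2 \<cdot>\<^sub>v unit_vec (2^N) (st N k) else 0\<^sub>v (2^N))"
  using assms by (subst hop_unit) (auto simp: bit_st st_lt flip_st1 flip_st2)



lemma sum_list_upto: "sum_list (map g [m..m + int K - 1]) = (\<Sum>k<K. g (m + int k))"
proof (induction K)
  case 0 then show ?case by simp
next
  case (Suc K)
  have "[m..m + int (Suc K) - 1] = [m..m + int K - 1] @ [m + int K]"
    using upto_rec2[of m "m + int K"] by simp
  then show ?case using Suc by simp
qed

lemma msum_carrier'[simp]: "(\<And>x. f x \<in> carrier_mat D D) \<Longrightarrow> msum D f xs \<in> carrier_mat D D"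
  by (induction xs) (auto simp: msum_def)

lemma msum_mv_entry:
  assumes f: "\<And>x. f x \<in> carrier_mat D D" and v: "v \<in> carrier_vec D" and i: "i < D"
  shows "(msum D f xs *\<^sub>v v) $ i = sum_list (map (\<lambda>x. (f x *\<^sub>v v) $ i) xs)"
proof (induction xs)
  case Nil then show ?case using i v by (simp add: msum_def scalar_prod_def)
next
  case (Cons x xs)
  have "msum D f (x # xs) = f x + msum D f xs" by (simp add: msum_def)
  then have "(msum D f (x # xs) *\<^sub>v v) = f x *\<^sub>v v + msum D f xs *\<^sub>v v"
    using f v by (simp add: add_mult_distrib_mat_vec[of _ D D])
  moreover have "dim_row (msum D f xs) = D" using msum_carrier'[of f D xs] f by blast
  ultimately show ?case using Cons i f by simp
qed

lemma mv_minus_minus: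
  fixes A B :: "complex mat"
  assumes "A \<in> carrier_mat D D" "B \<in> carrier_mat D D" "v \<in> carrier_vec D" "i < D"
  shows "((- A - B) *\<^sub>v v) $ i = - (A *\<^sub>v v) $ i - (B *\<^sub>v v) $ i"
  using assms
  by (simp add: mv_entry[of _ D D] sum_negf[symmetric] sum_subtractf[symmetric] algebra_simps)

lemma mv_smult:
  fixes A :: "complex mat"
  assumes "A \<in> carrier_mat D D" "v \<in> carrier_vec D" "i < D"
  shows "((c \<cdot>\<^sub>m A) *\<^sub>v v) $ i = c * (A *\<^sub>v v) $ i"
  using assms by (simp add: mv_entry[of _ D D] sum_distrib_left algebra_simps)

lemma sig_k: "sig m n A (m + int k) = site_op (nsites m n) k A"
  by (simp add: sig_def)

lemma sig_k1: "sig m n A (m + int k + 1) = site_op (nsites m n) (Suc k) A"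
  by (simp add: sig_def nat_add_distrib)

lemma H_entry:
  assumes mn: "m \<le> n" and v: "v \<in> carrier_vec (2 ^ nsites m n)" and i: "i < 2 ^ nsites m n"
  shows "(H_Lambda m n \<nu> *\<^sub>v v) $ i =
     - (\<Sum>k<nsites m n - 1. (hop (nsites m n) k *\<^sub>v v) $ i)
     - (\<Sum>k<nsites m n. complex_of_real (\<nu> (m + int k)) * (site_op (nsites m n) k pauli_z *\<^sub>v v) $ i)"
proof -
  let ?N = "nsites m n"
  let ?D = "2 ^ nsites m n"
  let ?f = "\<lambda>j. sig m n pauli_x j * sig m n pauli_x (j + 1) + sig m n pauli_y j * sig m n pauli_y (j + 1)"
  let ?g = "\<lambda>j. complex_of_real (\<nu> j) \<cdot>\<^sub>m sig m n pauli_z j"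
  have fc: "\<And>j. ?f j \<in> carrier_mat ?D ?D"
    unfolding sig_def by (intro add_carrier_mat mult_carrier_mat[of _ ?D ?D] site_op_carrier)
  have gc: "\<And>j. ?g j \<in> carrier_mat ?D ?D" unfolding sig_def by simp
  have N1: "?N \<ge> 1" using mn by (simp add: nsites_def)
  have n1: "n - 1 = m + int (?N - 1) - 1" using mn by (simp add: nsites_def)
  have n2: "n = m + int ?N - 1" using mn by (simp add: nsites_def)
  have "(H_Lambda m n \<nu> *\<^sub>v v) $ i = - (msum ?D ?f [m..n - 1] *\<^sub>v v) $ i - (msum ?D ?g [m..n] *\<^sub>v v) $ i"
    unfolding H_Lambda_def by (rule mv_minus_minus) (use fc gc v i in auto)
  also have "(msum ?D ?f [m..n - 1] *\<^sub>v v) $ i = (\<Sum>k<?N - 1. (hop ?N k *\<^sub>v v) $ i)"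
    unfolding msum_mv_entry[OF fc v i] n1 sum_list_upto
    by (simp add: hop_def sig_k sig_k1 del: of_nat_diff)
  also have "(msum ?D ?g [m..n] *\<^sub>v v) $ i = (\<Sum>k<?N. complex_of_real (\<nu> (m + int k)) * (site_op ?N k pauli_z *\<^sub>v v) $ i)"
    unfolding msum_mv_entry[OF gc v i] arg_cong[of _ _ "\<lambda>x. [m..x]", OF n2] sum_list_upto
    using v i by (simp add: mv_smult[of _ ?D] sig_k)
  finally show ?thesis .
qed



definition E0 :: "int \<Rightarrow> int \<Rightarrow> (int \<Rightarrow> real) \<Rightarrow> complex" where
  "E0 m n \<nu> = (\<Sum>k<nsites m n. complex_of_real (\<nu> (m + int k)))"

lemma sz_entry:
  assumes "k < N" "b < 2^N" "i < 2^N"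
  shows "(site_op N k pauli_z *\<^sub>v unit_vec (2^N) b) $ i = (if i = b then (if bit b k then -1 else 1) else 0)"
  using assms by (simp add: sz_unit)

lemma H_mask:
  assumes mn: "m \<le> n" and i: "i < 2 ^ nsites m n"
  shows "(H_Lambda m n \<nu> *\<^sub>v unit_vec (2 ^ nsites m n) (mask (nsites m n))) $ i
       = (if i = mask (nsites m n) then E0 m n \<nu> else 0)"
proof -
  let ?N = "nsites m n"
  have "(H_Lambda m n \<nu> *\<^sub>v unit_vec (2 ^ ?N) (mask ?N)) $ i =
     - (\<Sum>k<?N - 1. (hop ?N k *\<^sub>v unit_vec (2 ^ ?N) (mask ?N)) $ i)
     - (\<Sum>k<?N. complex_of_real (\<nu> (m + int k)) * (site_op ?N k pauli_z *\<^sub>v unit_vec (2 ^ ?N) (mask ?N)) $ i)"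
    by (rule H_entry[OF mn _ i]) simp
  also have "(\<Sum>k<?N - 1. (hop ?N k *\<^sub>v unit_vec (2 ^ ?N) (mask ?N)) $ i) = 0"
    using i by (intro sum.neutral) (auto simp: hop_mask)
  also have "(\<Sum>k<?N. complex_of_real (\<nu> (m + int k)) * (site_op ?N k pauli_z *\<^sub>v unit_vec (2 ^ ?N) (mask ?N)) $ i)
      = (\<Sum>k<?N. (if i = mask ?N then - complex_of_real (\<nu> (m + int k)) else 0))"
  proof (intro sum.cong refl)
    fix k assume "k \<in> {..<?N}"
    then have k: "k < ?N" by simp
    show "complex_of_real (\<nu> (m + int k)) * (site_op ?N k pauli_z *\<^sub>v unit_vec (2 ^ ?N) (mask ?N)) $ i
      = (if i = mask ?N then - complex_of_real (\<nu> (m + int k)) else 0)"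
      unfolding sz_entry[OF k mask_lt i] using k by (auto simp: bit_mask_nat)
  qed
  finally show ?thesis by (cases "i = mask ?N") (simp_all add: E0_def sum_negf)
qed

lemma H_st:
  assumes mn: "m \<le> n" and i: "i < 2 ^ nsites m n" and j: "j < nsites m n"
  shows "(H_Lambda m n \<nu> *\<^sub>v unit_vec (2 ^ nsites m n) (st (nsites m n) j)) $ i
       = (if i = st (nsites m n) j then E0 m n \<nu> - 2 * complex_of_real (\<nu> (m + int j)) else 0)
       + (if Suc j < nsites m n \<and> i = st (nsites m n) (Suc j) then -2 else 0)
       + (if 0 < j \<and> i = st (nsites m n) (j - 1) then -2 else 0)"
proof -
  let ?N = "nsites m n"
  let ?e = "unit_vec (2 ^ ?N) (st ?N j)"
  have "(H_Lambda m n \<nu> *\<^sub>v ?e) $ i =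
     - (\<Sum>k<?N - 1. (hop ?N k *\<^sub>v ?e) $ i)
     - (\<Sum>k<?N. complex_of_real (\<nu> (m + int k)) * (site_op ?N k pauli_z *\<^sub>v ?e) $ i)"
    by (rule H_entry[OF mn _ i]) simp
  also have "(\<Sum>k<?N - 1. (hop ?N k *\<^sub>v ?e) $ i)
     = (\<Sum>k<?N - 1. (if k = j then (if i = st ?N (Suc j) then 2 else 0) else 0)
                   + (if k = j - 1 then (if 0 < j \<and> i = st ?N k then 2 else 0) else 0))"
  proof (intro sum.cong refl)
    fix k assume "k \<in> {..<?N - 1}"
    then have k: "Suc k < ?N" by simp
    show "(hop ?N k *\<^sub>v ?e) $ i = (if k = j then (if i = st ?N (Suc j) then 2 else 0) else 0)
                   + (if k = j - 1 then (if 0 < j \<and> i = st ?N k then 2 else 0) else 0)"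
    proof -
      have sl: "st ?N x < 2 ^ ?N" for x by (rule st_lt)
      consider "k = j" | "Suc k = j" | "k \<noteq> j" "Suc k \<noteq> j" by blast
      then show ?thesis
      proof cases
        case 1 then show ?thesis unfolding hop_st[OF k j] using i sl by auto
      next
        case 2 then have "k = j - 1" "0 < j" "k \<noteq> j" by simp_all
        then show ?thesis unfolding hop_st[OF k j] using i sl 2 by simp
      next
        case 3 then have "k \<noteq> j - 1 \<or> j = 0" by linarith
        then show ?thesis unfolding hop_st[OF k j] using i sl 3 by auto
      qed
    qed
  qed
  also have "\<dots> = (if Suc j < ?N \<and> i = st ?N (Suc j) then 2 else 0) + (if 0 < j \<and> i = st ?N (j - 1) then 2 else 0)"
  proof -
    have a: "(\<Sum>k<?N - 1. (if k = j then (if i = st ?N (Suc j) then 2 else 0) else 0 :: complex))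
       = (if Suc j < ?N \<and> i = st ?N (Suc j) then 2 else 0)"
      by (subst sum.delta) auto
    have b: "(\<Sum>k<?N - 1. (if k = j - 1 then (if 0 < j \<and> i = st ?N k then 2 else 0) else 0 :: complex))
       = (if 0 < j \<and> i = st ?N (j - 1) then 2 else 0)"
      using j by (subst sum.delta) auto
    show ?thesis unfolding sum.distrib a b ..
  qed
  also have "(\<Sum>k<?N. complex_of_real (\<nu> (m + int k)) * (site_op ?N k pauli_z *\<^sub>v ?e) $ i)
      = (\<Sum>k<?N. (if i = st ?N j then (if k = j then 2 * complex_of_real (\<nu> (m + int k)) else 0) - complex_of_real (\<nu> (m + int k)) else 0))"
  proof (intro sum.cong refl)
    fix k assume "k \<in> {..<?N}"
    then have k: "k < ?N" by simp
    show "complex_of_real (\<nu> (m + int k)) * (site_op ?N k pauli_z *\<^sub>v ?e) $ i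
      = (if i = st ?N j then (if k = j then 2 * complex_of_real (\<nu> (m + int k)) else 0) - complex_of_real (\<nu> (m + int k)) else 0)"
      unfolding sz_entry[OF k st_lt i] using k by (auto simp: bit_st)
  qed
  also have "\<dots> = (if i = st ?N j then 2 * complex_of_real (\<nu> (m + int j)) - E0 m n \<nu> else 0)"
    using j by (cases "i = st ?N j") (simp_all add: E0_def sum_subtractf sum.delta)
  finally show ?thesis by (cases "i = st ?N j") simp_all
qed



definition Pm :: "nat \<Rightarrow> complex mat" where
  "Pm N = mat (2^N) N (\<lambda>(a,p). if a = st N p then 1 else 0)"

definition Km :: "int \<Rightarrow> int \<Rightarrow> (int \<Rightarrow> real) \<Rightarrow> complex mat" where
  "Km m n \<nu> = mat (nsites m n) (nsites m n) (\<lambda>(p,q). if p = q then E0 m n \<nu> - 2 * complex_of_real (\<nu> (m + int p))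
      else if p = Suc q \<or> q = Suc p then -2 else 0)"

definition P0 :: "nat \<Rightarrow> complex mat" where
  "P0 N = mat (2^N) 1 (\<lambda>(a,p). if a = mask N then 1 else 0)"

definition K0 :: "int \<Rightarrow> int \<Rightarrow> (int \<Rightarrow> real) \<Rightarrow> complex mat" where
  "K0 m n \<nu> = mat 1 1 (\<lambda>_. E0 m n \<nu>)"

lemma H_carrier: "H_Lambda m n \<nu> \<in> carrier_mat (2 ^ nsites m n) (2 ^ nsites m n)"
proof -
  let ?D = "2 ^ nsites m n"
  have fc: "\<And>j. sig m n pauli_x j * sig m n pauli_x (j + 1) + sig m n pauli_y j * sig m n pauli_y (j + 1) \<in> carrier_mat ?D ?D"
    unfolding sig_def by (intro add_carrier_mat mult_carrier_mat[of _ ?D ?D] site_op_carrier)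
  have gc: "\<And>j. complex_of_real (\<nu> j) \<cdot>\<^sub>m sig m n pauli_z j \<in> carrier_mat ?D ?D" unfolding sig_def by simp
  show ?thesis unfolding H_Lambda_def using fc gc by (intro minus_carrier_mat uminus_carrier_mat msum_carrier') auto
qed

lemma mult_col_entry:
  fixes A B :: "complex mat"
  assumes "A \<in> carrier_mat a b" "B \<in> carrier_mat b c" "i < a" "j < c"
  shows "(A * B) $$ (i,j) = (A *\<^sub>v col B j) $ i"
  using assms by simp

lemma col_Pm: "q < N \<Longrightarrow> col (Pm N) q = unit_vec (2^N) (st N q)"
  by (rule eq_vecI) (auto simp: Pm_def st_lt)

lemma col_P0: "col (P0 N) 0 = unit_vec (2^N) (mask N)"
  by (rule eq_vecI) (auto simp: P0_def)

lemma HP_intertwine: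
  assumes mn: "m \<le> n"
  shows "H_Lambda m n \<nu> * Pm (nsites m n) = Pm (nsites m n) * Km m n \<nu>"
proof (rule eq_matI)
  let ?N = "nsites m n"
  fix a q assume "a < dim_row (Pm ?N * Km m n \<nu>)" "q < dim_col (Pm ?N * Km m n \<nu>)"
  then have a: "a < 2^?N" and q: "q < ?N" by (auto simp: Pm_def Km_def)
  have "(H_Lambda m n \<nu> * Pm ?N) $$ (a,q) = (H_Lambda m n \<nu> *\<^sub>v unit_vec (2^?N) (st ?N q)) $ a"
    using H_carrier[of m n \<nu>] a q by (simp add: col_Pm[OF q, symmetric] Pm_def)
  also have "\<dots> = (if a = st ?N q then E0 m n \<nu> - 2 * complex_of_real (\<nu> (m + int q)) else 0)
       + (if Suc q < ?N \<and> a = st ?N (Suc q) then -2 else 0)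
       + (if 0 < q \<and> a = st ?N (q - 1) then -2 else 0)" (is "_ = ?F")
    by (rule H_st[OF mn a q])
  also have "?F = (Pm ?N * Km m n \<nu>) $$ (a,q)"
  proof -
    have PK: "(Pm ?N * Km m n \<nu>) $$ (a,q) = (\<Sum>p<?N. (if a = st ?N p then 1 else 0) * Km m n \<nu> $$ (p,q))"
      by (subst mult_entry[of _ "2^?N" ?N _ ?N]) (use a q in \<open>auto simp: Pm_def Km_def\<close>)
    show ?thesis
    proof (cases "\<exists>p0<?N. a = st ?N p0")
      case True
      then obtain p0 where p0: "p0 < ?N" "a = st ?N p0" by blast
      have "(\<Sum>p<?N. (if a = st ?N p then 1 else 0) * Km m n \<nu> $$ (p,q)) = (\<Sum>p<?N. if p = p0 then Km m n \<nu> $$ (p,q) else 0)"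
      proof (intro sum.cong refl)
        fix p assume "p \<in> {..<?N}"
        then have "(a = st ?N p) = (p = p0)" using p0 st_inj[of p ?N p0] by auto
        then show "(if a = st ?N p then 1 else 0) * Km m n \<nu> $$ (p,q) = (if p = p0 then Km m n \<nu> $$ (p,q) else 0)"
          by simp
      qed
      also have "\<dots> = Km m n \<nu> $$ (p0,q)" using p0 by (subst sum.delta) auto
      finally have s: "(Pm ?N * Km m n \<nu>) $$ (a,q) = Km m n \<nu> $$ (p0,q)" using PK by simp
      have e1: "a = st ?N q \<longleftrightarrow> p0 = q" using p0 q st_inj by auto
      have e2: "Suc q < ?N \<and> a = st ?N (Suc q) \<longleftrightarrow> p0 = Suc q" using p0 q st_inj by auto
      have e3: "0 < q \<and> a = st ?N (q - 1) \<longleftrightarrow> Suc p0 = q" using p0 q st_inj[of p0 ?N "q - 1"] by auto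
      show ?thesis unfolding s e1 e2 e3 using p0 q by (auto simp: Km_def)
    next
      case False
      then have s0: "(\<Sum>p<?N. (if a = st ?N p then 1 else 0) * Km m n \<nu> $$ (p,q)) = 0"
        by (intro sum.neutral) auto
      have f1: "\<not> a = st ?N q" using False q by auto
      have f2: "\<not> (Suc q < ?N \<and> a = st ?N (Suc q))" using False by auto
      have f3: "\<not> (0 < q \<and> a = st ?N (q - 1))" using False q by auto
      show ?thesis unfolding PK s0 using f1 f2 f3 by simp
    qed
  qed
  finally show "(H_Lambda m n \<nu> * Pm ?N) $$ (a,q) = (Pm ?N * Km m n \<nu>) $$ (a,q)" .
qed (use H_carrier[of m n \<nu>] in \<open>auto simp: Pm_def Km_def\<close>)

lemma HP0_intertwine:
  assumes mn: "m \<le> n"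
  shows "H_Lambda m n \<nu> * P0 (nsites m n) = P0 (nsites m n) * K0 m n \<nu>"
proof (rule eq_matI)
  let ?N = "nsites m n"
  fix a q assume "a < dim_row (P0 ?N * K0 m n \<nu>)" "q < dim_col (P0 ?N * K0 m n \<nu>)"
  then have a: "a < 2^?N" and q: "q = 0" by (auto simp: P0_def K0_def)
  have "(H_Lambda m n \<nu> * P0 ?N) $$ (a,q) = (H_Lambda m n \<nu> *\<^sub>v unit_vec (2^?N) (mask ?N)) $ a"
    using H_carrier[of m n \<nu>] a q by (simp add: col_P0[symmetric] P0_def)
  also have "\<dots> = (if a = mask ?N then E0 m n \<nu> else 0)" by (rule H_mask[OF mn a])
  also have "\<dots> = (P0 ?N * K0 m n \<nu>) $$ (a,q)"
    using a q by (subst mult_entry[of _ "2^?N" 1 _ 1]) (auto simp: P0_def K0_def)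
  finally show "(H_Lambda m n \<nu> * P0 ?N) $$ (a,q) = (P0 ?N * K0 m n \<nu>) $$ (a,q)" .
qed (use H_carrier[of m n \<nu>] in \<open>auto simp: P0_def K0_def\<close>)



lemma vnorm_L2: "vnorm v = L2_set (\<lambda>i. cmod (v $ i)) {..<dim_vec v}"
  by (simp add: vnorm_def L2_set_def)

lemma vnorm_le_sum: "vnorm v \<le> (\<Sum>i<dim_vec v. cmod (v $ i))"
  unfolding vnorm_L2 by (rule L2_set_le_sum) simp

lemma comp_le_vnorm: "j < dim_vec v \<Longrightarrow> cmod (v $ j) \<le> vnorm v"
  unfolding vnorm_L2 by (rule member_le_L2_set) auto

lemma vnorm_mv_bound:
  fixes X :: "complex mat"
  assumes X: "X \<in> carrier_mat D D" and w: "w \<in> carrier_vec D" and wn: "vnorm w \<le> 1"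
  shows "vnorm (X *\<^sub>v w) \<le> (\<Sum>i<D. \<Sum>j<D. cmod (X $$ (i,j)))"
proof -
  have "vnorm (X *\<^sub>v w) \<le> (\<Sum>i<D. cmod ((X *\<^sub>v w) $ i))"
    using vnorm_le_sum[of "X *\<^sub>v w"] X by simp
  also have "\<dots> \<le> (\<Sum>i<D. \<Sum>j<D. cmod (X $$ (i,j)))"
  proof (rule sum_mono)
    fix i assume "i \<in> {..<D}"
    then have i: "i < D" by simp
    have "cmod ((X *\<^sub>v w) $ i) = cmod (\<Sum>j<D. X $$ (i,j) * w $ j)"
      using mv_entry[OF X w i] by simp
    also have "\<dots> \<le> (\<Sum>j<D. cmod (X $$ (i,j)) * cmod (w $ j))"
      by (rule order.trans[OF norm_sum]) (simp add: norm_mult)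
    also have "\<dots> \<le> (\<Sum>j<D. cmod (X $$ (i,j)))"
    proof (rule sum_mono)
      fix j assume "j \<in> {..<D}"
      then have "cmod (w $ j) \<le> 1" using comp_le_vnorm[of j w] w wn by auto
      then show "cmod (X $$ (i,j)) * cmod (w $ j) \<le> cmod (X $$ (i,j))"
        by (simp add: mult_left_le)
    qed
    finally show "cmod ((X *\<^sub>v w) $ i) \<le> (\<Sum>j<D. cmod (X $$ (i,j)))" .
  qed
  finally show ?thesis .
qed

lemma opnorm_ge:
  fixes X :: "complex mat"
  assumes X: "X \<in> carrier_mat D D" and v: "v \<in> carrier_vec D" and vn: "vnorm v \<le> 1"
  shows "vnorm (X *\<^sub>v v) \<le> opnorm X"
  unfolding opnorm_def
proof (rule cSup_upper)
  show "vnorm (X *\<^sub>v v) \<in> {vnorm (X *\<^sub>v v) |v. v \<in> carrier_vec (dim_col X) \<and> vnorm v \<le> 1}"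
    using X v vn by auto
  show "bdd_above {vnorm (X *\<^sub>v v) |v. v \<in> carrier_vec (dim_col X) \<and> vnorm v \<le> 1}"
    unfolding bdd_above_def using vnorm_mv_bound[OF X] X by auto
qed

lemma vnorm_smult_unit:
  assumes "b < D"
  shows "vnorm (z \<cdot>\<^sub>v unit_vec D b) = cmod z"
proof -
  have "(\<Sum>i<D. (cmod ((z \<cdot>\<^sub>v unit_vec D b) $ i))\<^sup>2) = (\<Sum>i<D. if i = b then (cmod z)\<^sup>2 else 0)"
    using assms by (intro sum.cong refl) auto
  also have "\<dots> = (cmod z)\<^sup>2" using assms by (subst sum.delta) auto
  finally show ?thesis by (simp add: vnorm_def)
qed



lemma sz_mask: "k < N \<Longrightarrow> site_op N k pauli_z *\<^sub>v unit_vec (2^N) (mask N) = (-1) \<cdot>\<^sub>v unit_vec (2^N) (mask N)"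
  by (subst sz_unit) (auto simp: bit_mask_nat)

lemma foldr_z:
  fixes B :: "complex mat"
  assumes xs: "\<forall>x\<in>set xs. m \<le> x \<and> nat (x - m) < nsites m n"
    and B: "B \<in> carrier_mat (2 ^ nsites m n) (2 ^ nsites m n)" and w: "w \<in> carrier_vec (2 ^ nsites m n)"
    and Bw: "B *\<^sub>v w = c \<cdot>\<^sub>v unit_vec (2 ^ nsites m n) (mask (nsites m n))"
  shows "foldr (\<lambda>i M. sig m n pauli_z i * M) xs B \<in> carrier_mat (2 ^ nsites m n) (2 ^ nsites m n)
    \<and> foldr (\<lambda>i M. sig m n pauli_z i * M) xs B *\<^sub>v w = ((-1)^length xs * c) \<cdot>\<^sub>v unit_vec (2 ^ nsites m n) (mask (nsites m n))"
  using xs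
proof (induction xs)
  case Nil then show ?case using B Bw by simp
next
  case (Cons x xs)
  let ?N = "nsites m n"
  let ?D = "2 ^ nsites m n"
  let ?F = "foldr (\<lambda>i M. sig m n pauli_z i * M) xs B"
  have IH: "?F \<in> carrier_mat ?D ?D" "?F *\<^sub>v w = ((-1)^length xs * c) \<cdot>\<^sub>v unit_vec ?D (mask ?N)"
    using Cons by auto
  have k: "nat (x - m) < ?N" using Cons.prems by simp
  have S: "sig m n pauli_z x \<in> carrier_mat ?D ?D" by (simp add: sig_def)
  have "(sig m n pauli_z x * ?F) *\<^sub>v w = sig m n pauli_z x *\<^sub>v (?F *\<^sub>v w)"
    using S IH w by simp
  also have "\<dots> = ((-1)^length xs * c) \<cdot>\<^sub>v (sig m n pauli_z x *\<^sub>v unit_vec ?D (mask ?N))"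
    unfolding IH(2) using S by (simp add: mult_mat_vec[of _ ?D ?D])
  also have "\<dots> = ((-1)^length (x # xs) * c) \<cdot>\<^sub>v unit_vec ?D (mask ?N)"
    unfolding sig_def sz_mask[OF k] by (rule eq_vecI) auto
  finally show ?case using S IH by simp
qed

lemma set_st: "j < N \<Longrightarrow> set_bit j (st N j) = mask N"
  by (rule bit_eqI) (auto simp: bit_set_bit_iff bit_st bit_mask_nat)

lemma a_mask: "nat (l - m) < nsites m n \<Longrightarrow>
  a_op m n l *\<^sub>v unit_vec (2 ^ nsites m n) (mask (nsites m n)) = 0 \<cdot>\<^sub>v unit_vec (2 ^ nsites m n) (mask (nsites m n))"
  unfolding a_op_site sig_def by (subst a_unit) (auto simp: bit_mask_nat intro!: eq_vecI)

lemma a_st: "nat (l - m) < nsites m n \<Longrightarrow> j < nsites m n \<Longrightarrow>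
  a_op m n l *\<^sub>v unit_vec (2 ^ nsites m n) (st (nsites m n) j) = (if j = nat (l - m) then 1 else 0) \<cdot>\<^sub>v unit_vec (2 ^ nsites m n) (mask (nsites m n))"
  unfolding a_op_site sig_def by (subst a_unit) (auto simp: bit_st st_lt set_st intro!: eq_vecI)

lemma adag_mask: "nat (r - m) < nsites m n \<Longrightarrow>
  a_star m n r *\<^sub>v unit_vec (2 ^ nsites m n) (mask (nsites m n)) = unit_vec (2 ^ nsites m n) (st (nsites m n) (nat (r - m)))"
  unfolding a_star_site sig_def by (subst adag_unit) (auto simp: bit_mask_nat st_def)

lemma c_list: "m \<le> l \<Longrightarrow> l \<le> n \<Longrightarrow> \<forall>x\<in>set [m..l - 1]. m \<le> x \<and> nat (x - m) < nsites m n"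
  by (auto simp: nsites_def)

lemma a_op_carrier: "a_op m n l \<in> carrier_mat (2 ^ nsites m n) (2 ^ nsites m n)"
  by (simp add: a_op_site sig_def)

lemma L_lt: "m \<le> l \<Longrightarrow> l \<le> n \<Longrightarrow> nat (l - m) < nsites m n"
  by (simp add: nsites_def)

lemma c_carrier: "m \<le> l \<Longrightarrow> l \<le> n \<Longrightarrow> c_op m n l \<in> carrier_mat (2 ^ nsites m n) (2 ^ nsites m n)"
  unfolding c_op_def
  using foldr_z[OF c_list a_op_carrier unit_vec_carrier a_mask[OF L_lt]] by blast

lemma c_mask: "m \<le> l \<Longrightarrow> l \<le> n \<Longrightarrow>
  c_op m n l *\<^sub>v unit_vec (2 ^ nsites m n) (mask (nsites m n)) = 0 \<cdot>\<^sub>v unit_vec (2 ^ nsites m n) (mask (nsites m n))"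
  unfolding c_op_def
  using foldr_z[OF c_list a_op_carrier unit_vec_carrier a_mask[OF L_lt]] by simp

lemma c_st: "m \<le> l \<Longrightarrow> l \<le> n \<Longrightarrow> j < nsites m n \<Longrightarrow>
  c_op m n l *\<^sub>v unit_vec (2 ^ nsites m n) (st (nsites m n) j)
   = ((-1)^length [m..l - 1] * (if j = nat (l - m) then 1 else 0)) \<cdot>\<^sub>v unit_vec (2 ^ nsites m n) (mask (nsites m n))"
  unfolding c_op_def
  using foldr_z[OF c_list a_op_carrier unit_vec_carrier a_st[OF L_lt]] by blast



lemma Pm_carrier: "Pm N \<in> carrier_mat (2^N) N" by (simp add: Pm_def)
lemma Km_carrier: "Km m n \<nu> \<in> carrier_mat (nsites m n) (nsites m n)" by (simp add: Km_def)
lemma P0_carrier: "P0 N \<in> carrier_mat (2^N) 1" by (simp add: P0_def)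
lemma K0_carrier: "K0 m n \<nu> \<in> carrier_mat 1 1" by (simp add: K0_def)

lemma mexp_Pm:
  assumes mn: "m \<le> n"
  shows "mexp (s \<cdot>\<^sub>m H_Lambda m n \<nu>) * Pm (nsites m n) = Pm (nsites m n) * mexp (s \<cdot>\<^sub>m Km m n \<nu>)"
proof (rule mexp_intertwine)
  let ?N = "nsites m n"
  show "s \<cdot>\<^sub>m H_Lambda m n \<nu> \<in> carrier_mat (2^?N) (2^?N)" using H_carrier by simp
  show "Pm ?N \<in> carrier_mat (2^?N) ?N" by (rule Pm_carrier)
  show "s \<cdot>\<^sub>m Km m n \<nu> \<in> carrier_mat ?N ?N" using Km_carrier by simp
  have "(s \<cdot>\<^sub>m H_Lambda m n \<nu>) * Pm ?N = s \<cdot>\<^sub>m (H_Lambda m n \<nu> * Pm ?N)"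
    by (rule mult_smult_assoc_mat[OF H_carrier Pm_carrier])
  also have "\<dots> = s \<cdot>\<^sub>m (Pm ?N * Km m n \<nu>)" by (simp add: HP_intertwine[OF mn])
  also have "\<dots> = Pm ?N * (s \<cdot>\<^sub>m Km m n \<nu>)"
    by (rule mult_smult_distrib[OF Pm_carrier Km_carrier, symmetric])
  finally show "(s \<cdot>\<^sub>m H_Lambda m n \<nu>) * Pm ?N = Pm ?N * (s \<cdot>\<^sub>m Km m n \<nu>)" .
qed

lemma mexp_P0:
  assumes mn: "m \<le> n"
  shows "mexp (s \<cdot>\<^sub>m H_Lambda m n \<nu>) * P0 (nsites m n) = P0 (nsites m n) * mexp (s \<cdot>\<^sub>m K0 m n \<nu>)"
proof (rule mexp_intertwine)
  let ?N = "nsites m n"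
  show "s \<cdot>\<^sub>m H_Lambda m n \<nu> \<in> carrier_mat (2^?N) (2^?N)" using H_carrier by simp
  show "P0 ?N \<in> carrier_mat (2^?N) 1" by (rule P0_carrier)
  show "s \<cdot>\<^sub>m K0 m n \<nu> \<in> carrier_mat 1 1" using K0_carrier by simp
  have "(s \<cdot>\<^sub>m H_Lambda m n \<nu>) * P0 ?N = s \<cdot>\<^sub>m (H_Lambda m n \<nu> * P0 ?N)"
    by (rule mult_smult_assoc_mat[OF H_carrier P0_carrier])
  also have "\<dots> = s \<cdot>\<^sub>m (P0 ?N * K0 m n \<nu>)" by (simp add: HP0_intertwine[OF mn])
  also have "\<dots> = P0 ?N * (s \<cdot>\<^sub>m K0 m n \<nu>)"
    by (rule mult_smult_distrib[OF P0_carrier K0_carrier, symmetric])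
  finally show "(s \<cdot>\<^sub>m H_Lambda m n \<nu>) * P0 ?N = P0 ?N * (s \<cdot>\<^sub>m K0 m n \<nu>)" .
qed

lemma mexp_H_carrier: "mexp (s \<cdot>\<^sub>m H_Lambda m n \<nu>) \<in> carrier_mat (2 ^ nsites m n) (2 ^ nsites m n)"
  using H_carrier by (intro mexp_carrier) simp

lemma mexp_st:
  assumes mn: "m \<le> n" and R: "R < nsites m n"
  shows "mexp (s \<cdot>\<^sub>m H_Lambda m n \<nu>) *\<^sub>v unit_vec (2 ^ nsites m n) (st (nsites m n) R)
     = Pm (nsites m n) *\<^sub>v col (mexp (s \<cdot>\<^sub>m Km m n \<nu>)) R"
proof -
  let ?N = "nsites m n"
  have M: "mexp (s \<cdot>\<^sub>m Km m n \<nu>) \<in> carrier_mat ?N ?N" using Km_carrier by (intro mexp_carrier) simp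
  have "mexp (s \<cdot>\<^sub>m H_Lambda m n \<nu>) *\<^sub>v unit_vec (2 ^ ?N) (st ?N R) = col (mexp (s \<cdot>\<^sub>m H_Lambda m n \<nu>) * Pm ?N) R"
    using col_mult2[OF mexp_H_carrier Pm_carrier R] col_Pm[OF R] by simp
  also have "\<dots> = col (Pm ?N * mexp (s \<cdot>\<^sub>m Km m n \<nu>)) R" by (simp add: mexp_Pm[OF mn])
  also have "\<dots> = Pm ?N *\<^sub>v col (mexp (s \<cdot>\<^sub>m Km m n \<nu>)) R"
    by (rule col_mult2[OF Pm_carrier M R])
  finally show ?thesis .
qed

lemma mexp_mask:
  assumes mn: "m \<le> n"
  shows "mexp (s \<cdot>\<^sub>m H_Lambda m n \<nu>) *\<^sub>v unit_vec (2 ^ nsites m n) (mask (nsites m n))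
     = exp (s * E0 m n \<nu>) \<cdot>\<^sub>v unit_vec (2 ^ nsites m n) (mask (nsites m n))"
proof -
  let ?N = "nsites m n"
  have sK: "s \<cdot>\<^sub>m K0 m n \<nu> = mat 1 1 (\<lambda>_. s * E0 m n \<nu>)"
    by (rule eq_matI) (auto simp: K0_def)
  have M: "mexp (s \<cdot>\<^sub>m K0 m n \<nu>) \<in> carrier_mat 1 1" using K0_carrier by (intro mexp_carrier) simp
  have "mexp (s \<cdot>\<^sub>m H_Lambda m n \<nu>) *\<^sub>v unit_vec (2 ^ ?N) (mask ?N) = col (mexp (s \<cdot>\<^sub>m H_Lambda m n \<nu>) * P0 ?N) 0"
    using col_mult2[OF mexp_H_carrier P0_carrier, of 0] col_P0 by simp
  also have "\<dots> = col (P0 ?N * mexp (s \<cdot>\<^sub>m K0 m n \<nu>)) 0" by (simp add: mexp_P0[OF mn])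
  also have "\<dots> = P0 ?N *\<^sub>v col (mexp (s \<cdot>\<^sub>m K0 m n \<nu>)) 0"
    by (rule col_mult2[OF P0_carrier M]) simp
  also have "\<dots> = exp (s * E0 m n \<nu>) \<cdot>\<^sub>v unit_vec (2 ^ ?N) (mask ?N)"
  proof (rule eq_vecI)
    fix a assume "a < dim_vec (exp (s * E0 m n \<nu>) \<cdot>\<^sub>v unit_vec (2 ^ ?N) (mask ?N))"
    then have a: "a < 2 ^ ?N" by simp
    have "(P0 ?N *\<^sub>v col (mexp (s \<cdot>\<^sub>m K0 m n \<nu>)) 0) $ a = P0 ?N $$ (a,0) * mexp (s \<cdot>\<^sub>m K0 m n \<nu>) $$ (0,0)"
    proof -
      have cv: "col (mexp (s \<cdot>\<^sub>m K0 m n \<nu>)) 0 \<in> carrier_vec 1"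
        using M unfolding carrier_vec_def by simp
      show ?thesis unfolding mv_entry[OF P0_carrier cv a] using M by simp
    qed
    also have "\<dots> = (if a = mask ?N then exp (s * E0 m n \<nu>) else 0)"
    proof -
      have p: "P0 ?N $$ (a,0) = (if a = mask ?N then 1 else 0)"
        unfolding P0_def using a by (subst index_mat) auto
      show ?thesis unfolding p sK mexp_1x1 by simp
    qed
    finally show "(P0 ?N *\<^sub>v col (mexp (s \<cdot>\<^sub>m K0 m n \<nu>)) 0) $ a = (exp (s * E0 m n \<nu>) \<cdot>\<^sub>v unit_vec (2 ^ ?N) (mask ?N)) $ a"
      using a by simp
  qed (simp add: P0_def)
  finally show ?thesis .
qed



lemma E0_real: "E0 m n \<nu> = complex_of_real (\<Sum>k<nsites m n. \<nu> (m + int k))"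
  by (simp add: E0_def)

lemma cmod_exp_imag: "cmod (exp (\<i> * complex_of_real t * E0 m n \<nu>)) = 1"
  by (simp add: E0_real norm_exp_eq_Re)

lemma Heff_carrier: "H_eff m n \<nu> \<in> carrier_mat (nsites m n) (nsites m n)"
  by (simp add: H_eff_def)

lemma Km_shift:
  "(- \<i> * complex_of_real t) \<cdot>\<^sub>m Km m n \<nu> =
     cnj (- 2 * \<i> * complex_of_real t) \<cdot>\<^sub>m H_eff m n \<nu> + (- \<i> * complex_of_real t * E0 m n \<nu>) \<cdot>\<^sub>m 1\<^sub>m (nsites m n)"
proof (rule eq_matI)
  let ?N = "nsites m n"
  fix p q assume "p < dim_row (cnj (- 2 * \<i> * complex_of_real t) \<cdot>\<^sub>m H_eff m n \<nu> + (- \<i> * complex_of_real t * E0 m n \<nu>) \<cdot>\<^sub>m 1\<^sub>m ?N)"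
    "q < dim_col (cnj (- 2 * \<i> * complex_of_real t) \<cdot>\<^sub>m H_eff m n \<nu> + (- \<i> * complex_of_real t * E0 m n \<nu>) \<cdot>\<^sub>m 1\<^sub>m ?N)"
  then have p: "p < ?N" and q: "q < ?N" by auto
  have K: "Km m n \<nu> $$ (p,q) = (if p = q then E0 m n \<nu> - 2 * complex_of_real (\<nu> (m + int p))
      else if p = Suc q \<or> q = Suc p then -2 else 0)" unfolding Km_def using p q by (subst index_mat) auto
  have H: "H_eff m n \<nu> $$ (p,q) = (if p = q then complex_of_real (\<nu> (m + int p))
      else if p = q + 1 \<or> q = p + 1 then 1 else 0)" unfolding H_eff_def using p q by (subst index_mat) auto
  have c: "cnj (- 2 * \<i> * complex_of_real t) = 2 * \<i> * complex_of_real t" by simp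
  show "((- \<i> * complex_of_real t) \<cdot>\<^sub>m Km m n \<nu>) $$ (p,q) = (cnj (- 2 * \<i> * complex_of_real t) \<cdot>\<^sub>m H_eff m n \<nu> + (- \<i> * complex_of_real t * E0 m n \<nu>) \<cdot>\<^sub>m 1\<^sub>m ?N) $$ (p,q)"
  proof -
    have l: "((- \<i> * complex_of_real t) \<cdot>\<^sub>m Km m n \<nu>) $$ (p,q) = (- \<i> * complex_of_real t) * Km m n \<nu> $$ (p,q)"
      using p q by (subst index_smult_mat) (auto simp: Km_def)
    have r: "(cnj (- 2 * \<i> * complex_of_real t) \<cdot>\<^sub>m H_eff m n \<nu> + (- \<i> * complex_of_real t * E0 m n \<nu>) \<cdot>\<^sub>m 1\<^sub>m ?N) $$ (p,q)
       = 2 * \<i> * complex_of_real t * H_eff m n \<nu> $$ (p,q) + (if p = q then - \<i> * complex_of_real t * E0 m n \<nu> else 0)"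
      using p q by (simp add: H_eff_def)
    show ?thesis unfolding l r K H
      by (cases "p = q"; cases "p = Suc q \<or> q = Suc p") (simp_all add: algebra_simps)
  qed
qed (auto simp: Km_def H_eff_def)

lemma Q_lemma:
  assumes ml: "m \<le> l" and ln: "l \<le> n"
  shows "c_op m n l * Pm (nsites m n) = mat (2 ^ nsites m n) (nsites m n)
     (\<lambda>(a,p). if a = mask (nsites m n) \<and> p = nat (l - m) then (-1)^length [m..l - 1] else 0)"
proof (rule eq_matI)
  let ?N = "nsites m n"
  fix a p assume "a < dim_row (mat (2 ^ ?N) ?N (\<lambda>(a,p). if a = mask ?N \<and> p = nat (l - m) then (-1)^length [m..l - 1] else 0 :: complex))"
    "p < dim_col (mat (2 ^ ?N) ?N (\<lambda>(a,p). if a = mask ?N \<and> p = nat (l - m) then (-1)^length [m..l - 1] else 0 :: complex))"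
  then have a: "a < 2 ^ ?N" and p: "p < ?N" by auto
  have "(c_op m n l * Pm ?N) $$ (a,p) = (c_op m n l *\<^sub>v col (Pm ?N) p) $ a"
    using c_carrier[OF ml ln] Pm_carrier[of ?N] a p by simp
  also have "\<dots> = (((-1)^length [m..l - 1] * (if p = nat (l - m) then 1 else 0)) \<cdot>\<^sub>v unit_vec (2 ^ ?N) (mask ?N)) $ a"
    unfolding col_Pm[OF p] c_st[OF ml ln p] ..
  also have "\<dots> = (if a = mask ?N \<and> p = nat (l - m) then (-1)^length [m..l - 1] else 0)"
    using a by auto
  finally show "(c_op m n l * Pm ?N) $$ (a,p) = mat (2 ^ ?N) ?N (\<lambda>(a,p). if a = mask ?N \<and> p = nat (l - m) then (-1)^length [m..l - 1] else 0) $$ (a,p)"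
    using a p by simp
qed (use c_carrier[OF ml ln] Pm_carrier in auto)

theorem proposition6p3:
  fixes m n l r :: int and \<nu> :: "int \<Rightarrow> real" and t :: real
  assumes "m \<le> l" and "l \<le> r" and "r \<le> n"
  shows "opnorm (c_t m n \<nu> l t * a_star m n r - a_star m n r * c_t m n \<nu> l t)
           \<ge> cmod ((mexp ((- 2 * \<i> * complex_of_real t) \<cdot>\<^sub>m H_eff m n \<nu>) *\<^sub>v unit_vec (nsites m n) (nat (l - m)))
                     $ nat (r - m))"
proof -
  note ml = assms(1) and lr = assms(2) and rn = assms(3)
  have ln: "l \<le> n" and mn: "m \<le> n" and mr: "m \<le> r" using assms by linarith+
  let ?N = "nsites m n"
  let ?D = "2 ^ nsites m n :: nat"
  let ?w = "mask ?N :: nat"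
  let ?L = "nat (l - m)" and ?R = "nat (r - m)"
  let ?H = "H_Lambda m n \<nu>"
  let ?sp = "\<i> * complex_of_real t" and ?sm = "- \<i> * complex_of_real t"
  let ?s0 = "- 2 * \<i> * complex_of_real t"
  let ?Ep = "mexp (?sp \<cdot>\<^sub>m ?H)" and ?Em = "mexp (?sm \<cdot>\<^sub>m ?H)"
  let ?c = "c_op m n l" and ?A = "a_star m n r"
  let ?C = "c_t m n \<nu> l t"
  let ?M1 = "mexp (?sm \<cdot>\<^sub>m Km m n \<nu>)"
  let ?eps = "(-1)^length [m..l - 1] :: complex"
  have L: "?L < ?N" using L_lt[OF ml ln] .
  have R: "?R < ?N" using L_lt[OF mr rn] .
  have Ep: "?Ep \<in> carrier_mat ?D ?D" and Em: "?Em \<in> carrier_mat ?D ?D" by (rule mexp_H_carrier)+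
  have c: "?c \<in> carrier_mat ?D ?D" by (rule c_carrier[OF ml ln])
  have A: "?A \<in> carrier_mat ?D ?D" by (simp add: a_star_site sig_def)
  have C: "?C \<in> carrier_mat ?D ?D" unfolding c_t_def using Ep Em c by simp
  have M1: "?M1 \<in> carrier_mat ?N ?N" using Km_carrier by (intro mexp_carrier) simp
  have wl: "?w < ?D" by simp
  \<comment> \<open>action on the vacuum\<close>
  have Cw: "?C *\<^sub>v unit_vec ?D ?w = 0\<^sub>v ?D"
  proof -
    have "?C *\<^sub>v unit_vec ?D ?w = ?Ep *\<^sub>v (?c *\<^sub>v (?Em *\<^sub>v unit_vec ?D ?w))"
      unfolding c_t_def using Ep Em c
      by (simp only: assoc_mult_mat_vec[of "?Ep * ?c" ?D ?D ?Em ?D] assoc_mult_mat_vec[of ?Ep ?D ?D ?c ?D]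
          mult_carrier_mat[of ?Ep ?D ?D ?c ?D] unit_vec_carrier mult_mat_vec_carrier)
    also have "?Em *\<^sub>v unit_vec ?D ?w = exp (?sm * E0 m n \<nu>) \<cdot>\<^sub>v unit_vec ?D ?w"
      by (rule mexp_mask[OF mn])
    also have "?c *\<^sub>v (exp (?sm * E0 m n \<nu>) \<cdot>\<^sub>v unit_vec ?D ?w) = exp (?sm * E0 m n \<nu>) \<cdot>\<^sub>v (?c *\<^sub>v unit_vec ?D ?w)"
      by (rule mult_mat_vec[OF c unit_vec_carrier])
    also have "\<dots> = 0\<^sub>v ?D" unfolding c_mask[OF ml ln] by (rule eq_vecI) auto
    also have "?Ep *\<^sub>v 0\<^sub>v ?D = 0\<^sub>v ?D" using Ep by (intro eq_vecI) (auto simp: scalar_prod_def)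
    finally show ?thesis .
  qed
  have Pm: "Pm ?N \<in> carrier_mat ?D ?N" by (rule Pm_carrier)
  have colM: "col ?M1 ?R \<in> carrier_vec ?N" using col_dim[of ?M1 ?R] M1 by (metis carrier_matD(1))
  \<comment> \<open>action on the one-particle state\<close>
  have CR: "?C *\<^sub>v unit_vec ?D (st ?N ?R) = (?eps * ?M1 $$ (?L,?R) * exp (?sp * E0 m n \<nu>)) \<cdot>\<^sub>v unit_vec ?D ?w"
  proof -
    have "?C *\<^sub>v unit_vec ?D (st ?N ?R) = ?Ep *\<^sub>v (?c *\<^sub>v (?Em *\<^sub>v unit_vec ?D (st ?N ?R)))"
      unfolding c_t_def using Ep Em c
      by (simp only: assoc_mult_mat_vec[of "?Ep * ?c" ?D ?D ?Em ?D] assoc_mult_mat_vec[of ?Ep ?D ?D ?c ?D]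
          mult_carrier_mat[of ?Ep ?D ?D ?c ?D] unit_vec_carrier mult_mat_vec_carrier)
    also have "?Em *\<^sub>v unit_vec ?D (st ?N ?R) = Pm ?N *\<^sub>v col ?M1 ?R"
      by (rule mexp_st[OF mn R])
    also have "?c *\<^sub>v (Pm ?N *\<^sub>v col ?M1 ?R) = (?c * Pm ?N) *\<^sub>v col ?M1 ?R"
      by (rule assoc_mult_mat_vec[OF c Pm colM, symmetric])
    also have "\<dots> = (?eps * ?M1 $$ (?L,?R)) \<cdot>\<^sub>v unit_vec ?D ?w"
    proof (rule eq_vecI)
      fix a assume "a < dim_vec ((?eps * ?M1 $$ (?L,?R)) \<cdot>\<^sub>v unit_vec ?D ?w)"
      then have a: "a < ?D" by simp
      let ?Q = "mat ?D ?N (\<lambda>(a,p). if a = ?w \<and> p = ?L then ?eps else 0)"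
      have Q: "?Q \<in> carrier_mat ?D ?N" by simp
      have "((?c * Pm ?N) *\<^sub>v col ?M1 ?R) $ a = (?Q *\<^sub>v col ?M1 ?R) $ a"
        unfolding Q_lemma[OF ml ln] ..
      also have "\<dots> = (\<Sum>p<?N. ?Q $$ (a,p) * col ?M1 ?R $ p)"
        by (rule mv_entry[OF Q colM a])
      also have "\<dots> = (\<Sum>p<?N. if p = ?L then (if a = ?w then ?eps * ?M1 $$ (?L,?R) else 0) else 0)"
        using a M1 R by (intro sum.cong refl) auto
      also have "\<dots> = (if a = ?w then ?eps * ?M1 $$ (?L,?R) else 0)"
        using L by (subst sum.delta) auto
      finally show "((?c * Pm ?N) *\<^sub>v col ?M1 ?R) $ a = ((?eps * ?M1 $$ (?L,?R)) \<cdot>\<^sub>v unit_vec ?D ?w) $ a"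
        using a by auto
    qed (use c in simp)
    also have "?Ep *\<^sub>v ((?eps * ?M1 $$ (?L,?R)) \<cdot>\<^sub>v unit_vec ?D ?w) = (?eps * ?M1 $$ (?L,?R)) \<cdot>\<^sub>v (?Ep *\<^sub>v unit_vec ?D ?w)"
      by (rule mult_mat_vec[OF Ep unit_vec_carrier])
    also have "?Ep *\<^sub>v unit_vec ?D ?w = exp (?sp * E0 m n \<nu>) \<cdot>\<^sub>v unit_vec ?D ?w"
      by (rule mexp_mask[OF mn])
    also have "(?eps * ?M1 $$ (?L,?R)) \<cdot>\<^sub>v (exp (?sp * E0 m n \<nu>) \<cdot>\<^sub>v unit_vec ?D ?w)
       = (?eps * ?M1 $$ (?L,?R) * exp (?sp * E0 m n \<nu>)) \<cdot>\<^sub>v unit_vec ?D ?w"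
      by (rule eq_vecI) auto
    finally show ?thesis .
  qed
  let ?z = "?eps * ?M1 $$ (?L,?R) * exp (?sp * E0 m n \<nu>)"
  have Xw: "(?C * ?A - ?A * ?C) *\<^sub>v unit_vec ?D ?w = ?z \<cdot>\<^sub>v unit_vec ?D ?w"
  proof -
    have "(?C * ?A - ?A * ?C) *\<^sub>v unit_vec ?D ?w = (?C * ?A) *\<^sub>v unit_vec ?D ?w - (?A * ?C) *\<^sub>v unit_vec ?D ?w"
      by (rule minus_mult_distrib_mat_vec[OF mult_carrier_mat[OF C A] mult_carrier_mat[OF A C] unit_vec_carrier])
    also have "\<dots> = ?C *\<^sub>v (?A *\<^sub>v unit_vec ?D ?w) - ?A *\<^sub>v (?C *\<^sub>v unit_vec ?D ?w)"
      by (simp only: assoc_mult_mat_vec[OF C A unit_vec_carrier] assoc_mult_mat_vec[OF A C unit_vec_carrier])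
    also have "\<dots> = ?z \<cdot>\<^sub>v unit_vec ?D ?w - ?A *\<^sub>v 0\<^sub>v ?D"
      unfolding Cw adag_mask[OF R] CR ..
    also have "\<dots> = ?z \<cdot>\<^sub>v unit_vec ?D ?w"
      using A by (intro eq_vecI) (auto simp: scalar_prod_def)
    finally show ?thesis .
  qed
  have XC: "?C * ?A - ?A * ?C \<in> carrier_mat ?D ?D" by (rule minus_carrier_mat[OF mult_carrier_mat[OF A C]])
  have vn: "vnorm (unit_vec ?D ?w) \<le> 1"
    using vnorm_smult_unit[OF wl, of 1] by simp
  have "vnorm ((?C * ?A - ?A * ?C) *\<^sub>v unit_vec ?D ?w) \<le> opnorm (?C * ?A - ?A * ?C)"
    by (rule opnorm_ge[OF XC unit_vec_carrier vn])
  moreover have "vnorm ((?C * ?A - ?A * ?C) *\<^sub>v unit_vec ?D ?w) = cmod (?M1 $$ (?L,?R))"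
  proof -
    have "cmod (exp (?sp * E0 m n \<nu>)) = 1" by (simp add: E0_real norm_exp_eq_Re)
    moreover have "cmod ?eps = 1" by (simp add: norm_power)
    ultimately show ?thesis unfolding Xw vnorm_smult_unit[OF wl] by (simp add: norm_mult)
  qed
  moreover have "cmod (?M1 $$ (?L,?R)) = cmod ((mexp (?s0 \<cdot>\<^sub>m H_eff m n \<nu>) *\<^sub>v unit_vec ?N ?L) $ ?R)"
  proof -
    have HE: "cnj ?s0 \<cdot>\<^sub>m H_eff m n \<nu> \<in> carrier_mat ?N ?N" using Heff_carrier by simp
    have "?M1 $$ (?L,?R) = (exp (?sm * E0 m n \<nu>) \<cdot>\<^sub>m mexp (cnj ?s0 \<cdot>\<^sub>m H_eff m n \<nu>)) $$ (?L,?R)"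
      unfolding Km_shift mexp_shift[OF HE] ..
    also have "\<dots> = exp (?sm * E0 m n \<nu>) * mexp (cnj ?s0 \<cdot>\<^sub>m H_eff m n \<nu>) $$ (?L,?R)"
    proof -
      have ME: "mexp (cnj ?s0 \<cdot>\<^sub>m H_eff m n \<nu>) \<in> carrier_mat ?N ?N" by (rule mexp_carrier[OF HE])
      show ?thesis
        by (rule index_smult_mat(1)) (use ME L R in \<open>simp_all only: carrier_matD\<close>)
    qed
    also have "mexp (cnj ?s0 \<cdot>\<^sub>m H_eff m n \<nu>) $$ (?L,?R) = cnj (mexp (?s0 \<cdot>\<^sub>m H_eff m n \<nu>) $$ (?R,?L))"
      by (rule mexp_conj_sym[OF Heff_carrier _ _ L R]) (auto simp: H_eff_def)
    also have "mexp (?s0 \<cdot>\<^sub>m H_eff m n \<nu>) $$ (?R,?L) = (mexp (?s0 \<cdot>\<^sub>m H_eff m n \<nu>) *\<^sub>v unit_vec ?N ?L) $ ?R"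
      using Heff_carrier by (intro mat_col_unit[symmetric] L R mexp_carrier) simp
    finally have "?M1 $$ (?L,?R) = exp (?sm * E0 m n \<nu>) * cnj ((mexp (?s0 \<cdot>\<^sub>m H_eff m n \<nu>) *\<^sub>v unit_vec ?N ?L) $ ?R)" .
    moreover have "cmod (exp (?sm * E0 m n \<nu>)) = 1" by (simp add: E0_real norm_exp_eq_Re)
    ultimately show ?thesis by (simp add: norm_mult)
  qed
  ultimately show ?thesis by (simp add: c_t_def)
qed


end
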